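(* Let $\mathcal O$ be a cyclic operad with $\mathcal O[m]$ finite-dimensional for all $m$. For fixed $k$ and $m$, the restriction $M^{k,m}_n\colon \mathcal{OG}_{k,m}\to\mathcal{OG}_{k,m}$ of $M_n$ is an isomorphism for all sufficiently large $n$.
   Context: Work over $\mathbb R$. $\mathcal O$ is a cyclic operad (vector spaces $\mathcal O[m]$, unit $1_{\mathcal O}$, compositions, $\Sigma_{m+1}$-actions on $\mathcal O[m]$). For $m\ge2$ the $\mathcal O$-spiders with $m$ legs form $\mathcal S[m]=(\bigoplus_L\mathcal O[m-1])_{\Sigma_m}$, the sum over labelings $L$ of the legs of an $m$-star by $\{0,\dots,m-1\}$. A graph is a finite 1-dimensional CW complex with half-edge set $H(X)$ and involution $x\mapsto\bar x$ exchanging the two half-edges of each edge. An orientation of $X$ is an ordering of its vertices together with a direction on each edge, up to an even number of vertex transpositions and edge reversals. An $\mathcal O$-graph is an oriented graph without univalent vertices in which each vertex $v$ is colored by an $\mathcal O$-spider whose legs are identified with the half-edges at $v$. $\mathcal{OG}_{k,m}$ is the real vector space spanned by $\mathcal O$-graphs with $k$ vertices and $m$ half-edges, modulo $(\mathbf X,or)=-(\mathbf X,-or)$ and linearity in the spider coloring each vertex. For a pairing $\pi$ of $H(X)$ (a partition into 2-element sets), $X^\pi$ is the graph obtained by cutting all edges and regluing half-edges according to $\pi$; the standard pairing $\{x,\bar x\}$ gives $X$. Orientation of $X^\pi$: the union of the chord diagrams of $\pi$ and of the standard pairing on the vertex set $H(X)$ is a disjoint union $C(\pi)$ of circles; choose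 a representative of the orientation of $X$ whose edge directions (chords from initial to terminal half-edge) are coherent around each circle; each edge of $X^\pi$ inherits the direction induced by these coherent circle orientations, and the vertex order of $X$ is kept. $\mathbf X^\pi$ is the induced $\mathcal O$-graph (same vertex colorings). Let $c(\pi)$ be the number of components of $C(\pi)$. Define $M_n(\mathbf X)=\sum_\pi(2n)^{c(\pi)}\mathbf X^\pi$, the sum over all pairings $\pi$ of $H(X)$; it preserves each $\mathcal{OG}_{k,m}$. *)

theory Defs
  imports "HOL-Analysis.Analysis" "HOL-Combinatorics.Permutations"
begin

text \<open>An element a of Op[m] has legs labelled 0,...,m (0 = output).
  act m s a relabels the legs: the leg labelled j in a is labelled s j in act m s a
  (s a permutation of {0..m}, i.e. of Sigma_{m+1}; a left action).
  ocomp m n i a b = a o_i b (1 <= i <= m) glues leg i of a to leg 0 of b.\<close>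

definition comp_perm :: "nat \<Rightarrow> nat \<Rightarrow> nat \<Rightarrow> (nat \<Rightarrow> nat) \<Rightarrow> (nat \<Rightarrow> nat) \<Rightarrow> nat \<Rightarrow> nat" where
  "comp_perm m n i s t k =
     (let si = s i; pos = (\<lambda>j. if j < si then j else j + n - 1) in
      if k < i then pos (s k)
      else if k < i + n then si - 1 + t (k - i + 1)
      else if k \<le> m + n - 1 then pos (s (k - n + 1))
      else k)"

definition cyc :: "nat \<Rightarrow> nat \<Rightarrow> nat" where
  "cyc m j = (if j = 0 then m else if j \<le> m then j - 1 else j)"

definition cyclic_operad ::
  "(nat \<Rightarrow> 'a::real_vector set) \<Rightarrow> 'a \<Rightarrow> (nat \<Rightarrow> nat \<Rightarrow> nat \<Rightarrow> 'a \<Rightarrow> 'a \<Rightarrow> 'a)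
   \<Rightarrow> (nat \<Rightarrow> (nat \<Rightarrow> nat) \<Rightarrow> 'a \<Rightarrow> 'a) \<Rightarrow> bool" where
  "cyclic_operad Op e ocomp act \<longleftrightarrow>
     (\<forall>m. subspace (Op m)) \<and>
     e \<in> Op 1 \<and>
     \<comment> \<open>Sigma_{m+1} acts linearly on Op[m]\<close>
     (\<forall>m s a. s permutes {0..m} \<and> a \<in> Op m \<longrightarrow> act m s a \<in> Op m) \<and>
     (\<forall>m s a b c. s permutes {0..m} \<and> a \<in> Op m \<and> b \<in> Op m \<longrightarrow>
         act m s (a + b) = act m s a + act m s b \<and> act m s (c *\<^sub>R a) = c *\<^sub>R act m s a) \<and>
     (\<forall>m a. a \<in> Op m \<longrightarrow> act m id a = a) \<and>
     (\<forall>m s t a. s permutes {0..m} \<and> t permutes {0..m} \<and> a \<in> Op m \<longrightarrow>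
         act m (s \<circ> t) a = act m s (act m t a)) \<and>
     \<comment> \<open>bilinear partial compositions\<close>
     (\<forall>m n i a b. 1 \<le> i \<and> i \<le> m \<and> a \<in> Op m \<and> b \<in> Op n \<longrightarrow> ocomp m n i a b \<in> Op (m + n - 1)) \<and>
     (\<forall>m n i a a' b c. 1 \<le> i \<and> i \<le> m \<and> a \<in> Op m \<and> a' \<in> Op m \<and> b \<in> Op n \<longrightarrow>
         ocomp m n i (a + a') b = ocomp m n i a b + ocomp m n i a' b \<and>
         ocomp m n i (c *\<^sub>R a) b = c *\<^sub>R ocomp m n i a b) \<and>
     (\<forall>m n i a b b' c. 1 \<le> i \<and> i \<le> m \<and> a \<in> Op m \<and> b \<in> Op n \<and> b' \<in> Op n \<longrightarrow>
         ocomp m n i a (b + b') = ocomp m n i a b + ocomp m n i a b' \<and>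
         ocomp m n i a (c *\<^sub>R b) = c *\<^sub>R ocomp m n i a b) \<and>
     \<comment> \<open>unit\<close>
     (\<forall>n b. b \<in> Op n \<longrightarrow> ocomp 1 n 1 e b = b) \<and>
     (\<forall>m i a. 1 \<le> i \<and> i \<le> m \<and> a \<in> Op m \<longrightarrow> ocomp m 1 i a e = a) \<and>
     \<comment> \<open>sequential and parallel associativity\<close>
     (\<forall>m n l i j a b c. 1 \<le> i \<and> i \<le> m \<and> 1 \<le> j \<and> j \<le> n \<and> a \<in> Op m \<and> b \<in> Op n \<and> c \<in> Op l \<longrightarrow>
         ocomp (m + n - 1) l (i + j - 1) (ocomp m n i a b) c = ocomp m (n + l - 1) i a (ocomp n l j b c)) \<and>
     (\<forall>m n l i j a b c. 1 \<le> i \<and> i < j \<and> j \<le> m \<and> a \<in> Op m \<and> b \<in> Op n \<and> c \<in> Op l \<longrightarrow>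
         ocomp (m + n - 1) l (j + n - 1) (ocomp m n i a b) c = ocomp (m + l - 1) n i (ocomp m l j a c) b) \<and>
     \<comment> \<open>equivariance for permutations fixing the output leg 0\<close>
     (\<forall>m n i s t a b. 1 \<le> i \<and> i \<le> m \<and> s permutes {0..m} \<and> s 0 = 0 \<and> t permutes {0..n} \<and> t 0 = 0
         \<and> a \<in> Op m \<and> b \<in> Op n \<longrightarrow>
         ocomp m n (s i) (act m s a) (act n t b) = act (m + n - 1) (comp_perm m n i s t) (ocomp m n i a b)) \<and>
     \<comment> \<open>cyclic compatibility\<close>
     act 1 (cyc 1) e = e \<and>
     (\<forall>m n i a b. 2 \<le> i \<and> i \<le> m \<and> a \<in> Op m \<and> b \<in> Op n \<longrightarrow>
         act (m + n - 1) (cyc (m + n - 1)) (ocomp m n i a b) = ocomp m n (i - 1) (act m (cyc m) a) b) \<and>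
     (\<forall>m n a b. 1 \<le> m \<and> 1 \<le> n \<and> a \<in> Op m \<and> b \<in> Op n \<longrightarrow>
         act (m + n - 1) (cyc (m + n - 1)) (ocomp m n 1 a b) = ocomp n m n (act n (cyc n) b) (act m (cyc m) a))"

definition finite_dim_operad :: "(nat \<Rightarrow> 'a::real_vector set) \<Rightarrow> bool" where
  "finite_dim_operad Op \<longleftrightarrow> (\<forall>m. \<exists>B. finite B \<and> Op m \<subseteq> span B)"

text \<open>A representative Op-graph: half-edges {0..<m}, vertices {0..<k};
  gpair = edge involution x |-> xbar, gvtx = vertex of a half-edge,
  gst = set of initial half-edges (edge directions); the vertex order of the
  orientation is the order 0 < 1 < ... < k-1 of the vertex labels;
  glab v = labelling of the legs (half-edges at v) of the spider at v by {0..<val v},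
  gcol v = element of Op[val v - 1]; the spider at v is the class of (glab v, gcol v).
  Outside the relevant domains all data take fixed junk values.\<close>

datatype 'a ograph = OGraph (gpair: "nat \<Rightarrow> nat") (gvtx: "nat \<Rightarrow> nat") (gst: "nat set")
  (glab: "nat \<Rightarrow> nat \<Rightarrow> nat") (gcol: "nat \<Rightarrow> 'a")

definition valence :: "nat \<Rightarrow> 'a ograph \<Rightarrow> nat \<Rightarrow> nat" where
  "valence m g v = card {x. x < m \<and> gvtx g x = v}"

definition is_pairing :: "nat \<Rightarrow> (nat \<Rightarrow> nat) \<Rightarrow> bool" where
  "is_pairing m p \<longleftrightarrow> (\<forall>x<m. p x < m \<and> p x \<noteq> x \<and> p (p x) = x) \<and> (\<forall>x. m \<le> x \<longrightarrow> p x = x)"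

definition valid_ograph :: "(nat \<Rightarrow> 'a::real_vector set) \<Rightarrow> nat \<Rightarrow> nat \<Rightarrow> 'a ograph \<Rightarrow> bool" where
  "valid_ograph Op k m g \<longleftrightarrow>
     is_pairing m (gpair g) \<and>
     (\<forall>x<m. gvtx g x < k) \<and> (\<forall>x. m \<le> x \<longrightarrow> gvtx g x = 0) \<and>
     (\<forall>v<k. 2 \<le> valence m g v) \<and>
     gst g \<subseteq> {..<m} \<and> (\<forall>x<m. x \<in> gst g \<longleftrightarrow> gpair g x \<notin> gst g) \<and>
     (\<forall>v<k. bij_betw (glab g v) {x. x < m \<and> gvtx g x = v} {..<valence m g v}) \<and>
     (\<forall>v x. \<not> (v < k \<and> x < m \<and> gvtx g x = v) \<longrightarrow> glab g v x = 0) \<and>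
     (\<forall>v<k. gcol g v \<in> Op (valence m g v - 1)) \<and> (\<forall>v. k \<le> v \<longrightarrow> gcol g v = 0)"

definition delta :: "'b \<Rightarrow> 'b \<Rightarrow> real" where
  "delta r = (\<lambda>s. if s = r then 1 else 0)"

definition fspan :: "('b \<Rightarrow> real) set \<Rightarrow> ('b \<Rightarrow> real) set" where
  "fspan G = {(\<lambda>s. \<Sum>g\<in>T. c g * g s) | T c. finite T \<and> T \<subseteq> G}"

definition free_og :: "(nat \<Rightarrow> 'a::real_vector set) \<Rightarrow> nat \<Rightarrow> nat \<Rightarrow> ('a ograph \<Rightarrow> real) set" where
  "free_og Op k m = {f. finite {g. f g \<noteq> 0} \<and> (\<forall>g. f g \<noteq> 0 \<longrightarrow> valid_ograph Op k m g)}"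

definition flip_edge :: "'a ograph \<Rightarrow> nat \<Rightarrow> 'a ograph" where
  "flip_edge g x = OGraph (gpair g) (gvtx g)
      ((gst g - {x, gpair g x}) \<union> ({x, gpair g x} - gst g)) (glab g) (gcol g)"

definition transport :: "nat \<Rightarrow> nat \<Rightarrow> (nat \<Rightarrow> nat) \<Rightarrow> (nat \<Rightarrow> nat) \<Rightarrow> 'a ograph \<Rightarrow> 'a ograph" where
  "transport k m t r g = OGraph
      (t \<circ> gpair g \<circ> inv t)
      (\<lambda>x. if x < m then r (gvtx g (inv t x)) else 0)
      (t ` gst g)
      (\<lambda>v x. if v < k \<and> x < m then glab g (inv r v) (inv t x) else 0)
      (\<lambda>v. gcol g (inv r v))"

definition relabel_spider :: "(nat \<Rightarrow> (nat \<Rightarrow> nat) \<Rightarrow> 'a \<Rightarrow> 'a) \<Rightarrow> nat \<Rightarrow> 'a ograph \<Rightarrow> nat \<Rightarrow> (nat \<Rightarrow> nat) \<Rightarrow> 'a ograph" where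
  "relabel_spider act m g v p = OGraph (gpair g) (gvtx g) (gst g)
      ((glab g)(v := (\<lambda>x. if x < m \<and> gvtx g x = v then p (glab g v x) else 0)))
      ((gcol g)(v := act (valence m g v - 1) p (gcol g v)))"

definition set_color :: "'a ograph \<Rightarrow> nat \<Rightarrow> 'a \<Rightarrow> 'a ograph" where
  "set_color g v a = OGraph (gpair g) (gvtx g) (gst g) (glab g) ((gcol g)(v := a))"

text \<open>Relations: orientation reversal, isomorphism (with the sign of the vertex
  permutation, as the vertex order is part of the orientation), spider coinvariants,
  and linearity in the spider at each vertex.\<close>
definition og_relations ::
  "(nat \<Rightarrow> 'a::real_vector set) \<Rightarrow> (nat \<Rightarrow> (nat \<Rightarrow> nat) \<Rightarrow> 'a \<Rightarrow> 'a) \<Rightarrow> nat \<Rightarrow> nat \<Rightarrow> ('a ograph \<Rightarrow> real) set" where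
  "og_relations Op act k m =
     {(\<lambda>s. delta g s + delta (flip_edge g x) s) | g x. valid_ograph Op k m g \<and> x < m}
   \<union> {(\<lambda>s. delta g s - real_of_int (sign r) * delta (transport k m t r g) s) | g t r.
        valid_ograph Op k m g \<and> t permutes {..<m} \<and> r permutes {..<k}}
   \<union> {(\<lambda>s. delta g s - delta (relabel_spider act m g v p) s) | g v p.
        valid_ograph Op k m g \<and> v < k \<and> p permutes {..<valence m g v}}
   \<union> {(\<lambda>s. delta (set_color g v (c *\<^sub>R a + d *\<^sub>R b)) s - c * delta (set_color g v a) s
           - d * delta (set_color g v b) s) | g v a b c d.
        valid_ograph Op k m g \<and> v < k \<and> a \<in> Op (valence m g v - 1) \<and> b \<in> Op (valence m g v - 1)}"

text \<open>The relation subspace; OG_{k,m} = free_og Op k m / og_rel Op act k m.\<close>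
definition og_rel ::
  "(nat \<Rightarrow> 'a::real_vector set) \<Rightarrow> (nat \<Rightarrow> (nat \<Rightarrow> nat) \<Rightarrow> 'a \<Rightarrow> 'a) \<Rightarrow> nat \<Rightarrow> nat \<Rightarrow> ('a ograph \<Rightarrow> real) set" where
  "og_rel Op act k m = fspan (og_relations Op act k m)"

definition num_circles :: "nat \<Rightarrow> (nat \<Rightarrow> nat) \<Rightarrow> (nat \<Rightarrow> nat) \<Rightarrow> nat" where
  "num_circles m q p =
     (let E = {(x, q x) | x. x < m} \<union> {(x, p x) | x. x < m}
      in card ((\<lambda>x. {y. (x, y) \<in> E\<^sup>*}) ` {..<m}))"

text \<open>A representative of the orientation whose edge directions (set of initial half-edges)
  are coherent around every circle of C(p): along each circle one goes from an initial
  to a terminal half-edge along an edge of X and from a terminal half-edge t to p t,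
  which must be initial.\<close>
definition coherent_dirs :: "nat \<Rightarrow> 'a ograph \<Rightarrow> (nat \<Rightarrow> nat) \<Rightarrow> nat set" where
  "coherent_dirs m g p = (SOME S. S \<subseteq> {..<m} \<and> (\<forall>x<m. x \<in> S \<longleftrightarrow> gpair g x \<notin> S)
                                  \<and> (\<forall>x<m. p x \<in> S \<longleftrightarrow> x \<notin> S))"

text \<open>X^p with the induced orientation, and the sign relating the chosen coherent
  representative to the given one (one factor -1 per reversed edge).\<close>
definition regluing :: "nat \<Rightarrow> 'a ograph \<Rightarrow> (nat \<Rightarrow> nat) \<Rightarrow> 'a ograph" where
  "regluing m g p = OGraph p (gvtx g) ({..<m} - coherent_dirs m g p) (glab g) (gcol g)"

definition regluing_sign :: "nat \<Rightarrow> 'a ograph \<Rightarrow> (nat \<Rightarrow> nat) \<Rightarrow> real" where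
  "regluing_sign m g p = (-1) ^ card (gst g - coherent_dirs m g p)"

definition M_gen :: "nat \<Rightarrow> nat \<Rightarrow> 'a ograph \<Rightarrow> 'a ograph \<Rightarrow> real" where
  "M_gen n m g = (\<lambda>s. \<Sum>p\<in>{p. is_pairing m p}.
       (2 * real n) ^ num_circles m (gpair g) p * regluing_sign m g p * delta (regluing m g p) s)"

definition M_op :: "nat \<Rightarrow> nat \<Rightarrow> ('a ograph \<Rightarrow> real) \<Rightarrow> 'a ograph \<Rightarrow> real" where
  "M_op n m f = (\<lambda>s. \<Sum>g\<in>{g. f g \<noteq> 0}. f g * M_gen n m g s)"

definition induces_iso_on_quotient ::
  "('b \<Rightarrow> real) set \<Rightarrow> ('b \<Rightarrow> real) set \<Rightarrow> (('b \<Rightarrow> real) \<Rightarrow> ('b \<Rightarrow> real)) \<Rightarrow> bool" where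
  "induces_iso_on_quotient V W L \<longleftrightarrow>
     (\<forall>f\<in>V. L f \<in> V) \<and> (\<forall>f\<in>W. L f \<in> W) \<and>
     (\<forall>f\<in>V. L f \<in> W \<longrightarrow> f \<in> W) \<and>
     (\<forall>h\<in>V. \<exists>f\<in>V. (\<lambda>s. L f s - h s) \<in> W)"

end

theory Submission
  imports Defs "HOL-Library.Function_Algebras"
begin


definition lcc :: "('b \<Rightarrow> real) set \<Rightarrow> bool" where
  "lcc X \<longleftrightarrow> (\<lambda>s. 0) \<in> X \<and> (\<forall>f\<in>X. \<forall>h\<in>X. (\<lambda>s. f s + h s) \<in> X) \<and> (\<forall>f\<in>X. \<forall>a. (\<lambda>s. a * f s) \<in> X)"

lemma lcc_zero: "lcc X \<Longrightarrow> (\<lambda>s. 0) \<in> X" by (simp add: lcc_def)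
lemma lcc_add: "lcc X \<Longrightarrow> f \<in> X \<Longrightarrow> h \<in> X \<Longrightarrow> (\<lambda>s. f s + h s) \<in> X" by (simp add: lcc_def)
lemma lcc_scale: "lcc X \<Longrightarrow> f \<in> X \<Longrightarrow> (\<lambda>s. a * f s) \<in> X" by (simp add: lcc_def)
lemma lcc_minus: "lcc X \<Longrightarrow> f \<in> X \<Longrightarrow> (\<lambda>s. - f s) \<in> X"
  using lcc_scale[of X f "-1"] by simp
lemma lcc_diff: "lcc X \<Longrightarrow> f \<in> X \<Longrightarrow> h \<in> X \<Longrightarrow> (\<lambda>s. f s - h s) \<in> X"
  using lcc_add[of X f "\<lambda>s. - h s"] lcc_minus[of X h] by simp
lemma lcc_sum: assumes X: "lcc X" and A: "finite A" and FX: "\<And>i. i \<in> A \<Longrightarrow> F i \<in> X"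
  shows "(\<lambda>s. \<Sum>i\<in>A. a i * F i s) \<in> X"
  using A FX proof (induction A rule: finite_induct)
  case empty then show ?case using X by (simp add: lcc_zero)
next
  case (insert x F')
  have "(\<lambda>s. a x * F x s + (\<Sum>i\<in>F'. a i * F i s)) \<in> X"
    using insert X by (intro lcc_add lcc_scale) auto
  then show ?case using insert by simp
qed
lemma lcc_sum1: "lcc X \<Longrightarrow> finite A \<Longrightarrow> (\<And>i. i \<in> A \<Longrightarrow> F i \<in> X) \<Longrightarrow> (\<lambda>s. \<Sum>i\<in>A. F i s) \<in> X"
  using lcc_sum[of X A F "\<lambda>_. 1"] by simp
lemma lcc_cong: "f \<in> X \<Longrightarrow> (\<And>s. f s = h s) \<Longrightarrow> h \<in> X"
proof -
  assume a: "f \<in> X" "\<And>s. f s = h s" then have "f = h" by auto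
  with a(1) show ?thesis by (simp only:)
qed

lemma fspan_lcc: "lcc (fspan G)"
  unfolding lcc_def
proof (intro conjI ballI allI)
  show "(\<lambda>s. 0) \<in> fspan G" unfolding fspan_def by (rule CollectI, rule exI[of _ "{}"]) auto
next
  fix f h assume f: "f \<in> fspan G" and h: "h \<in> fspan G"
  from f obtain T1 c1 where T1: "finite T1" "T1 \<subseteq> G" "f = (\<lambda>s. \<Sum>g\<in>T1. c1 g * g s)"
    unfolding fspan_def by auto
  from h obtain T2 c2 where T2: "finite T2" "T2 \<subseteq> G" "h = (\<lambda>s. \<Sum>g\<in>T2. c2 g * g s)"
    unfolding fspan_def by auto
  define c where "c g = (if g \<in> T1 then c1 g else 0) + (if g \<in> T2 then c2 g else 0)" for g
  have "(\<lambda>s. f s + h s) = (\<lambda>s. \<Sum>g\<in>T1 \<union> T2. c g * g s)"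
  proof
    fix s
    have a: "(\<Sum>g\<in>T1 \<union> T2. (if g \<in> T1 then c1 g else 0) * g s) = (\<Sum>g\<in>T1. c1 g * g s)"
      by (rule sum.mono_neutral_cong_right) (use T1 T2 in auto)
    have b: "(\<Sum>g\<in>T1 \<union> T2. (if g \<in> T2 then c2 g else 0) * g s) = (\<Sum>g\<in>T2. c2 g * g s)"
      by (rule sum.mono_neutral_cong_right) (use T1 T2 in auto)
    show "f s + h s = (\<Sum>g\<in>T1 \<union> T2. c g * g s)"
      unfolding c_def distrib_right sum.distrib a b T1(3) T2(3) by simp
  qed
  then show "(\<lambda>s. f s + h s) \<in> fspan G" unfolding fspan_def using T1 T2 by blast
next
  fix f a assume f: "f \<in> fspan G"
  from f obtain T1 c1 where T1: "finite T1" "T1 \<subseteq> G" "f = (\<lambda>s. \<Sum>g\<in>T1. c1 g * g s)"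
    unfolding fspan_def by auto
  have "(\<lambda>s. a * f s) = (\<lambda>s. \<Sum>g\<in>T1. (a * c1 g) * g s)"
    unfolding T1(3) by (auto simp: sum_distrib_left mult.assoc)
  then show "(\<lambda>s. a * f s) \<in> fspan G" unfolding fspan_def using T1
    by (intro CollectI exI[of _ T1] exI[of _ "\<lambda>g. a * c1 g"]) simp
qed

lemma fspan_gen: "g \<in> G \<Longrightarrow> g \<in> fspan G"
  unfolding fspan_def by (rule CollectI, rule exI[of _ "{g}"], rule exI[of _ "\<lambda>_. 1"]) auto

lemma fspan_sub: assumes X: "lcc X" and G: "G \<subseteq> X" shows "fspan G \<subseteq> X"
proof
  fix f assume "f \<in> fspan G"
  then obtain T c where T: "finite T" "T \<subseteq> G" "f = (\<lambda>s. \<Sum>g\<in>T. c g * g s)"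
    unfolding fspan_def by auto
  have "(\<lambda>s. \<Sum>g\<in>T. c g * g s) \<in> X"
    by (rule lcc_sum[OF X T(1)]) (use T(2) G in auto)
  then show "f \<in> X" using T(3) by simp
qed

definition pair_on :: "nat set \<Rightarrow> (nat \<Rightarrow> nat) \<Rightarrow> bool" where
  "pair_on A p \<longleftrightarrow> (\<forall>x\<in>A. p x \<in> A \<and> p x \<noteq> x \<and> p (p x) = x)"

lemma pair_onD: "pair_on A q \<Longrightarrow> u \<in> A \<Longrightarrow> q u \<in> A \<and> q u \<noteq> u \<and> q (q u) = u"
  unfolding pair_on_def by blast

lemma pair_inj: "pair_on A q \<Longrightarrow> u \<in> A \<Longrightarrow> v \<in> A \<Longrightarrow> q u = q v \<Longrightarrow> u = v"
  using pair_onD by metis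

lemma pair_on_remove: assumes q: "pair_on A q" and x: "x \<in> A" shows "pair_on (A - {x, q x}) q"
  unfolding pair_on_def
proof (intro ballI)
  fix u assume u: "u \<in> A - {x, q x}"
  have h: "q u \<in> A" "q u \<noteq> u" "q (q u) = u" using pair_onD[OF q] u by auto
  have hx: "q x \<in> A" "q (q x) = x" using pair_onD[OF q x] by auto
  have "q u \<noteq> x" using pair_inj[OF q, of u "q x"] u hx by auto
  moreover have "q u \<noteq> q x" using pair_inj[OF q, of u x] u x by auto
  ultimately show "q u \<in> A - {x, q x} \<and> q u \<noteq> u \<and> q (q u) = u" using h by auto
qed

lemma coh_exists_gen:
  "finite A \<Longrightarrow> pair_on A q \<Longrightarrow> pair_on A p \<Longrightarrow>
   \<exists>S\<subseteq>A. \<forall>x\<in>A. (x \<in> S \<longleftrightarrow> q x \<notin> S) \<and> (p x \<in> S \<longleftrightarrow> x \<notin> S)"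
proof (induction "card A" arbitrary: A p rule: less_induct)
  case less
  note qA = less.prems(2) and pA = less.prems(3)
  show ?case
  proof (cases "A = {}")
    case True then show ?thesis by auto
  next
    case False
    then obtain x where x: "x \<in> A" by auto
    define y where "y = q x"
    define z where "z = p x"
    have y: "y \<in> A" "y \<noteq> x" "q y = x" using pair_onD[OF qA x] unfolding y_def by auto
    have z: "z \<in> A" "z \<noteq> x" "p z = x" using pair_onD[OF pA x] unfolding z_def by auto
    define A' where "A' = A - {x, y}"
    have fA': "finite A'" using less.prems(1) unfolding A'_def by simp
    have cA': "card A' < card A" unfolding A'_def
      by (rule psubset_card_mono) (use less.prems(1) x in auto)
    have qA': "pair_on A' q" unfolding A'_def y_def by (rule pair_on_remove[OF qA x])
    show ?thesis
    proof (cases "z = y")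
      case True
      have pA': "pair_on A' p" unfolding A'_def using pair_on_remove[OF pA x] True
        unfolding z_def by simp
      obtain S' where S': "S' \<subseteq> A'" "\<forall>u\<in>A'. (u \<in> S' \<longleftrightarrow> q u \<notin> S') \<and> (p u \<in> S' \<longleftrightarrow> u \<notin> S')"
        using less.hyps[OF cA' fA' qA' pA'] by blast
      define S where "S = insert x S'"
      have xy: "x \<notin> S'" "y \<notin> S'" using S'(1) unfolding A'_def by auto
      have "\<forall>u\<in>A. (u \<in> S \<longleftrightarrow> q u \<notin> S) \<and> (p u \<in> S \<longleftrightarrow> u \<notin> S)"
      proof
        fix u assume u: "u \<in> A"
        show "(u \<in> S \<longleftrightarrow> q u \<notin> S) \<and> (p u \<in> S \<longleftrightarrow> u \<notin> S)"
        proof (cases "u = x \<or> u = y")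
          case True2: True
          have f: "q x = y" "p x = y" "q y = x" "p y = x" using y z True unfolding y_def z_def by auto
          show ?thesis using f True2 xy y(2) unfolding S_def by auto
        next
          case False
          then have uA': "u \<in> A'" using u unfolding A'_def by auto
          have "q u \<in> A'" "p u \<in> A'" using pair_onD[OF qA' uA'] pair_onD[OF pA' uA'] by auto
          then have "q u \<noteq> x" "p u \<noteq> x" using uA' unfolding A'_def by auto
          then show ?thesis using S' uA' False unfolding S_def by auto
        qed
      qed
      moreover have "S \<subseteq> A" using S' x unfolding S_def A'_def by auto
      ultimately show ?thesis by blast
    next
      case False
      define w where "w = p y"
      have w0: "w \<in> A" "w \<noteq> y" "p w = y" using pair_onD[OF pA y(1)] unfolding w_def by auto
      have "w \<noteq> x" using pair_inj[OF pA, of y z] y z False w0 unfolding w_def by auto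
      have "w \<noteq> z"
      proof
        assume "w = z" then have "p y = p x" unfolding w_def z_def .
        then have "y = x" using pair_inj[OF pA y(1) x] by blast
        with y(2) show False by simp
      qed
      note w = w0 \<open>w \<noteq> x\<close> \<open>w \<noteq> z\<close>
      define p' where "p' = p(z := w, w := z)"
      have zA': "z \<in> A'" and wA': "w \<in> A'" using z w y False unfolding A'_def by auto
      have pA': "pair_on A' p'"
        unfolding pair_on_def
      proof
        fix u assume u: "u \<in> A'"
        show "p' u \<in> A' \<and> p' u \<noteq> u \<and> p' (p' u) = u"
        proof (cases "u = z \<or> u = w")
          case True then show ?thesis using zA' wA' w unfolding p'_def by auto
        next
          case F: False
          have uA: "u \<in> A" using u unfolding A'_def by auto
          have pu: "p u \<in> A" "p u \<noteq> u" "p (p u) = u" using pair_onD[OF pA uA] by auto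
          have "p u \<noteq> x" using pair_inj[OF pA, of u z] uA z F by auto
          moreover have "p u \<noteq> y" using pair_inj[OF pA, of u w] uA w F by auto
          moreover have "p u \<noteq> z" using u pu(3) z(3) unfolding A'_def by auto
          moreover have "p u \<noteq> w" using u pu(3) w(3) unfolding A'_def by auto
          ultimately show ?thesis using F pu unfolding p'_def A'_def by auto
        qed
      qed
      obtain S' where S': "S' \<subseteq> A'" "\<forall>u\<in>A'. (u \<in> S' \<longleftrightarrow> q u \<notin> S') \<and> (p' u \<in> S' \<longleftrightarrow> u \<notin> S')"
        using less.hyps[OF cA' fA' qA' pA'] by blast
      have xy: "x \<notin> S'" "y \<notin> S'" using S'(1) unfolding A'_def by auto
      have "p' z = w" unfolding p'_def using w by auto
      then have zw: "z \<in> S' \<longleftrightarrow> w \<notin> S'" using S'(2) zA' by auto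
      have "p' w = z" unfolding p'_def by auto
      then have wz: "w \<in> S' \<longleftrightarrow> z \<notin> S'" using S'(2) wA' by auto
      define S where "S = (if z \<in> S' then insert y S' else insert x S')"
      have zx: "z \<noteq> y" "w \<noteq> x" "z \<noteq> x" "w \<noteq> y" using False w z by auto
      have "\<forall>u\<in>A. (u \<in> S \<longleftrightarrow> q u \<notin> S) \<and> (p u \<in> S \<longleftrightarrow> u \<notin> S)"
      proof
        fix u assume u: "u \<in> A"
        show "(u \<in> S \<longleftrightarrow> q u \<notin> S) \<and> (p u \<in> S \<longleftrightarrow> u \<notin> S)"
        proof (cases "u = x \<or> u = y")
          case True
          have qx: "q x = y" "p x = z" "p y = w" unfolding y_def z_def w_def by auto
          from True show ?thesis
          proof
            assume "u = x" then show ?thesis using qx y zx xy zw unfolding S_def by (cases "z \<in> S'") auto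
          next
            assume "u = y" then show ?thesis using qx y zx xy zw unfolding S_def by (cases "z \<in> S'") auto
          qed
        next
          case F: False
          then have uA': "u \<in> A'" using u unfolding A'_def by auto
          have "q u \<in> A'" using pair_onD[OF qA' uA'] by auto
          then have qu: "q u \<noteq> x" "q u \<noteq> y" unfolding A'_def by auto
          have Su: "u \<in> S \<longleftrightarrow> u \<in> S'" "q u \<in> S \<longleftrightarrow> q u \<in> S'" using F qu unfolding S_def by auto
          have part1: "u \<in> S \<longleftrightarrow> q u \<notin> S" using S'(2) uA' Su by auto
          have part2: "p u \<in> S \<longleftrightarrow> u \<notin> S"
          proof (cases "u = z \<or> u = w")
            case True
            then show ?thesis
            proof
              assume "u = z" then show ?thesis using z Su zw xy zx y(2)
                unfolding S_def by (cases "z \<in> S'") auto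
            next
              assume "u = w" then show ?thesis using w Su zw xy zx y(2)
                unfolding S_def by (cases "z \<in> S'") auto
            qed
          next
            case F2: False
            then have "p' u = p u" unfolding p'_def by auto
            moreover have "p' u \<in> A'" using pair_onD[OF pA' uA'] by auto
            ultimately have "p u \<noteq> x" "p u \<noteq> y" unfolding A'_def by auto
            then have "p u \<in> S \<longleftrightarrow> p u \<in> S'" unfolding S_def by auto
            moreover have "p' u \<in> S' \<longleftrightarrow> u \<notin> S'" using S'(2) uA' by blast
            ultimately show ?thesis using Su(1) \<open>p' u = p u\<close> by simp
          qed
          show ?thesis using part1 part2 by blast
        qed
      qed
      moreover have "S \<subseteq> A" using S' x y unfolding S_def A'_def by auto
      ultimately show ?thesis by blast
    qed
  qed
qed


definition orient :: "nat \<Rightarrow> (nat \<Rightarrow> nat) \<Rightarrow> nat set \<Rightarrow> bool" where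
  "orient m q S \<longleftrightarrow> S \<subseteq> {..<m} \<and> (\<forall>x<m. x \<in> S \<longleftrightarrow> q x \<notin> S)"

definition cd :: "nat \<Rightarrow> (nat \<Rightarrow> nat) \<Rightarrow> (nat \<Rightarrow> nat) \<Rightarrow> nat set" where
  "cd m q p = (SOME S. S \<subseteq> {..<m} \<and> (\<forall>x<m. x \<in> S \<longleftrightarrow> q x \<notin> S) \<and> (\<forall>x<m. p x \<in> S \<longleftrightarrow> x \<notin> S))"

lemma coherent_dirs_cd: "coherent_dirs m g p = cd m (gpair g) p"
  unfolding coherent_dirs_def cd_def ..

lemma is_pairing_pair_on: "is_pairing m p \<Longrightarrow> pair_on {..<m} p"
  unfolding is_pairing_def pair_on_def by auto

lemma cd_props:
  assumes q: "is_pairing m q" and p: "is_pairing m p"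
  shows "cd m q p \<subseteq> {..<m}" "\<And>x. x < m \<Longrightarrow> x \<in> cd m q p \<longleftrightarrow> q x \<notin> cd m q p"
    "\<And>x. x < m \<Longrightarrow> p x \<in> cd m q p \<longleftrightarrow> x \<notin> cd m q p"
proof -
  obtain S where "S \<subseteq> {..<m}" "\<forall>x\<in>{..<m}. (x \<in> S \<longleftrightarrow> q x \<notin> S) \<and> (p x \<in> S \<longleftrightarrow> x \<notin> S)"
    using coh_exists_gen[of "{..<m}" q p] is_pairing_pair_on[OF q] is_pairing_pair_on[OF p] by auto
  then have "\<exists>S. S \<subseteq> {..<m} \<and> (\<forall>x<m. x \<in> S \<longleftrightarrow> q x \<notin> S) \<and> (\<forall>x<m. p x \<in> S \<longleftrightarrow> x \<notin> S)"
    by auto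
  from someI_ex[OF this] show "cd m q p \<subseteq> {..<m}" "\<And>x. x < m \<Longrightarrow> x \<in> cd m q p \<longleftrightarrow> q x \<notin> cd m q p"
    "\<And>x. x < m \<Longrightarrow> p x \<in> cd m q p \<longleftrightarrow> x \<notin> cd m q p"
    unfolding cd_def by blast+
qed

lemma cd_orient: "is_pairing m q \<Longrightarrow> is_pairing m p \<Longrightarrow> orient m q (cd m q p)"
  using cd_props unfolding orient_def by blast

lemma cd_orient2: assumes "is_pairing m q" "is_pairing m p"
  shows "orient m p ({..<m} - cd m q p)"
proof -
  have "x < m \<Longrightarrow> p x < m" for x using assms(2) unfolding is_pairing_def by auto
  then show ?thesis using cd_props[OF assms] unfolding orient_def by auto
qed

lemma pairing_lt: "is_pairing m p \<Longrightarrow> x < m \<Longrightarrow> p x < m"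
  unfolding is_pairing_def by auto
lemma pairing_inv: "is_pairing m p \<Longrightarrow> p (p x) = x"
  unfolding is_pairing_def by (cases "x < m") auto
lemma pairing_neq: "is_pairing m p \<Longrightarrow> x < m \<Longrightarrow> p x \<noteq> x"
  unfolding is_pairing_def by auto
lemma pairing_ge: "is_pairing m p \<Longrightarrow> m \<le> x \<Longrightarrow> p x = x"
  unfolding is_pairing_def by auto

lemma finite_Prs: "finite {p. is_pairing m p}"
proof -
  let ?r = "\<lambda>p. restrict p {..<m}"
  have sub: "?r ` {p. is_pairing m p} \<subseteq> PiE {..<m} (\<lambda>_. {..<m})"
  proof
    fix f assume "f \<in> ?r ` {p. is_pairing m p}"
    then obtain p where p: "is_pairing m p" "f = ?r p" by blast
    show "f \<in> PiE {..<m} (\<lambda>_. {..<m})"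
      by (rule PiE_I) (simp_all add: p(2) pairing_lt[OF p(1)])
  qed
  have inj: "inj_on ?r {p. is_pairing m p}"
  proof (rule inj_onI)
    fix p q assume p: "p \<in> {p. is_pairing m p}" and q: "q \<in> {p. is_pairing m p}" and e: "?r p = ?r q"
    show "p = q"
    proof
      fix x show "p x = q x"
      proof (cases "x < m")
        case True then show ?thesis using fun_cong[OF e, of x] by simp
      next
        case False then show ?thesis using p q pairing_ge[of m p x] pairing_ge[of m q x] by (simp add: not_less)
      qed
    qed
  qed
  have "finite (PiE {..<m} (\<lambda>_. {..<m}))" by (simp add: finite_PiE)
  then have "finite (?r ` {p. is_pairing m p})" by (rule finite_subset[OF sub])
  then show ?thesis by (rule finite_imageD[OF _ inj])
qed

lemma orient_sub: "orient m q S \<Longrightarrow> S \<subseteq> {..<m}" unfolding orient_def by auto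
lemma orient_fin: "orient m q S \<Longrightarrow> finite S" by (rule finite_subset[OF orient_sub]) auto

lemma orient_cross:
  assumes q: "is_pairing m q" and A: "orient m q A" and B: "orient m q B" and C: "orient m q C"
  shows "card (A \<inter> C - B) = card (B - A - C)"
proof -
  have B1: "B - A - C \<subseteq> {..<m}" using orient_sub[OF B] by auto
  have img: "q ` (B - A - C) = A \<inter> C - B"
  proof
    show "q ` (B - A - C) \<subseteq> A \<inter> C - B"
    proof
      fix y assume "y \<in> q ` (B - A - C)"
      then obtain x where x: "x \<in> B - A - C" "y = q x" by auto
      have "x < m" using x orient_sub[OF B] by auto
      then show "y \<in> A \<inter> C - B" using x A B C unfolding orient_def by auto
    qed
  next
    show "A \<inter> C - B \<subseteq> q ` (B - A - C)"
    proof
      fix y assume y: "y \<in> A \<inter> C - B"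
      have "y < m" using y orient_sub[OF A] by auto
      then have "q y \<in> B - A - C" using y A B C pairing_inv[OF q, of y] unfolding orient_def by auto
      moreover have "y = q (q y)" using pairing_inv[OF q] by simp
      ultimately show "y \<in> q ` (B - A - C)" by blast
    qed
  qed
  have inj: "inj_on q (B - A - C)"
  proof (rule inj_onI)
    fix a b assume "q a = q b"
    then have "q (q a) = q (q b)" by simp
    then show "a = b" using pairing_inv[OF q] by simp
  qed
  from card_image[OF inj] img show ?thesis by simp
qed

definition sg :: "nat \<Rightarrow> real" where "sg n = (-1) ^ n"

lemma sg_add: "sg (a + b) = sg a * sg b" unfolding sg_def by (simp add: power_add)
lemma sg_sq: "sg a * sg a = 1" unfolding sg_def by (induct a) auto
lemma sg_double: "sg (2 * a + b) = sg b" unfolding sg_def by (simp add: power_add power_mult)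
lemma sg_abs: "\<bar>sg a\<bar> = 1" unfolding sg_def by simp
lemma sg_nz: "sg a \<noteq> 0" unfolding sg_def by simp

lemma orient_parity:
  assumes q: "is_pairing m q" and A: "orient m q A" and B: "orient m q B" and C: "orient m q C"
  shows "sg (card (A - B)) * sg (card (A - C)) = sg (card (B - C))"
proof -
  have fA: "finite A" and fB: "finite B" using orient_fin A B by auto
  have e1: "card (A - B) = card (A - B - C) + card (A \<inter> C - B)"
  proof -
    have "A - B = (A - B - C) \<union> (A \<inter> C - B)" by blast
    then have "card (A - B) = card ((A - B - C) \<union> (A \<inter> C - B))" by simp
    also have "\<dots> = card (A - B - C) + card (A \<inter> C - B)" by (rule card_Un_disjoint) (use fA in auto)
    finally show ?thesis .
  qed
  have e2: "card (A - C) = card (A - B - C) + card (A \<inter> B - C)"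
  proof -
    have "A - C = (A - B - C) \<union> (A \<inter> B - C)" by blast
    then have "card (A - C) = card ((A - B - C) \<union> (A \<inter> B - C))" by simp
    also have "\<dots> = card (A - B - C) + card (A \<inter> B - C)" by (rule card_Un_disjoint) (use fA in auto)
    finally show ?thesis .
  qed
  have e3: "card (B - C) = card (B - A - C) + card (A \<inter> B - C)"
  proof -
    have "B - C = (B - A - C) \<union> (A \<inter> B - C)" by blast
    then have "card (B - C) = card ((B - A - C) \<union> (A \<inter> B - C))" by simp
    also have "\<dots> = card (B - A - C) + card (A \<inter> B - C)" by (rule card_Un_disjoint) (use fB in auto)
    finally show ?thesis .
  qed
  have "card (A - B) + card (A - C) = 2 * card (A - B - C) + card (B - C)"
    using e1 e2 e3 orient_cross[OF q A B C] by simp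
  then have "sg (card (A - B) + card (A - C)) = sg (card (B - C))" by (simp only: sg_double)
  then show ?thesis by (simp only: sg_add)
qed

definition flipS :: "(nat \<Rightarrow> nat) \<Rightarrow> nat set \<Rightarrow> nat \<Rightarrow> nat set" where
  "flipS q S x = (S - {x, q x}) \<union> ({x, q x} - S)"

lemma flipS_orient:
  assumes q: "is_pairing m q" and A: "orient m q A" and x: "x < m"
  shows "orient m q (flipS q A x)" "card (A - flipS q A x) = 1"
proof -
  have qx: "q x < m" "q x \<noteq> x" "q (q x) = x" using q x pairing_lt pairing_neq pairing_inv by auto
  show "orient m q (flipS q A x)"
    unfolding orient_def flipS_def
  proof (intro conjI allI impI)
    show "A - {x, q x} \<union> ({x, q x} - A) \<subseteq> {..<m}" using orient_sub[OF A] qx x by auto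
  next
    fix y assume y: "y < m"
    have qy: "q y < m" "q (q y) = y" using q y pairing_lt pairing_inv by auto
    have Ay: "y \<in> A \<longleftrightarrow> q y \<notin> A" using A y unfolding orient_def by blast
    show "(y \<in> A - {x, q x} \<union> ({x, q x} - A)) = (q y \<notin> A - {x, q x} \<union> ({x, q x} - A))"
    proof (cases "y = x \<or> y = q x")
      case True
      then have "q y = q x \<or> q y = x" using qx by auto
      then have "q y \<in> {x, q x}" by blast
      moreover have "y \<in> {x, q x}" using True by blast
      ultimately show ?thesis using Ay by blast
    next
      case False
      then have "q y \<noteq> x" "q y \<noteq> q x" using qx qy by metis+
      then show ?thesis using False Ay by blast
    qed
  qed
  have "A - flipS q A x = A \<inter> {x, q x}" unfolding flipS_def by auto
  moreover have "x \<in> A \<longleftrightarrow> q x \<notin> A" using A x unfolding orient_def by auto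
  ultimately show "card (A - flipS q A x) = 1"
  proof (cases "x \<in> A")
    case True
    then have "A \<inter> {x, q x} = {x}" using \<open>x \<in> A \<longleftrightarrow> q x \<notin> A\<close> by blast
    then show ?thesis using \<open>A - flipS q A x = A \<inter> {x, q x}\<close> by simp
  next
    case False
    then have "A \<inter> {x, q x} = {q x}" using \<open>x \<in> A \<longleftrightarrow> q x \<notin> A\<close> by blast
    then show ?thesis using \<open>A - flipS q A x = A \<inter> {x, q x}\<close> by simp
  qed
qed

lemma flipS_sign:
  assumes q: "is_pairing m q" and A: "orient m q A" and C: "orient m q C" and x: "x < m"
  shows "sg (card (flipS q A x - C)) = - sg (card (A - C))"
proof -
  note F = flipS_orient[OF q A x]
  have "sg (card (A - flipS q A x)) * sg (card (A - C)) = sg (card (flipS q A x - C))"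
    by (rule orient_parity[OF q A F(1) C])
  then show ?thesis using F(2) unfolding sg_def by simp
qed

definition ocan :: "nat \<Rightarrow> (nat \<Rightarrow> nat) \<Rightarrow> nat set" where
  "ocan m q = {x. x < m \<and> x < q x}"

lemma ocan_orient: assumes q: "is_pairing m q" shows "orient m q (ocan m q)"
  unfolding orient_def ocan_def
proof (intro conjI allI impI)
  fix x assume x: "x < m"
  have "q x < m" "q x \<noteq> x" "q (q x) = x" using q x pairing_lt pairing_neq pairing_inv by auto
  then show "(x \<in> {x. x < m \<and> x < q x}) = (q x \<notin> {x. x < m \<and> x < q x})" using x by auto
qed auto


definition Erel :: "nat \<Rightarrow> (nat \<Rightarrow> nat) \<Rightarrow> (nat \<Rightarrow> nat) \<Rightarrow> (nat \<times> nat) set" where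
  "Erel m q p = {(x, q x) | x. x < m} \<union> {(x, p x) | x. x < m}"

definition cls :: "nat \<Rightarrow> (nat \<Rightarrow> nat) \<Rightarrow> (nat \<Rightarrow> nat) \<Rightarrow> nat \<Rightarrow> nat set" where
  "cls m q p x = {y. (x, y) \<in> (Erel m q p)\<^sup>*}"

lemma num_circles_cls: "num_circles m q p = card (cls m q p ` {..<m})"
  unfolding num_circles_def cls_def Erel_def Let_def ..

context
  fixes m q p
  assumes q: "is_pairing m q" and p: "is_pairing m p"
begin

lemma Erel_sym: "(x, y) \<in> Erel m q p \<Longrightarrow> (y, x) \<in> Erel m q p"
proof -
  assume "(x, y) \<in> Erel m q p"
  then consider "x < m" "y = q x" | "x < m" "y = p x" unfolding Erel_def by blast
  then show "(y, x) \<in> Erel m q p"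
  proof cases
    case 1
    then have "y < m" "q y = x" using q pairing_lt pairing_inv by auto
    then show ?thesis unfolding Erel_def by blast
  next
    case 2
    then have "y < m" "p y = x" using p pairing_lt pairing_inv by auto
    then show ?thesis unfolding Erel_def by blast
  qed
qed

lemma Erel_lt: "(x, y) \<in> Erel m q p \<Longrightarrow> x < m \<and> y < m"
proof -
  assume "(x, y) \<in> Erel m q p"
  then consider "x < m" "y = q x" | "x < m" "y = p x" unfolding Erel_def by blast
  then show ?thesis using pairing_lt[OF q, of x] pairing_lt[OF p, of x] by cases auto
qed

lemma rtr_sym: "(x, y) \<in> (Erel m q p)\<^sup>* \<Longrightarrow> (y, x) \<in> (Erel m q p)\<^sup>*"
proof (induction rule: rtrancl_induct)
  case base then show ?case by simp
next
  case (step y z)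
  have "(z, y) \<in> (Erel m q p)\<^sup>*" using Erel_sym[OF step(2)] by blast
  then show ?case using step(3) by (rule rtrancl_trans)
qed

lemma rtr_lt: "(x, y) \<in> (Erel m q p)\<^sup>* \<Longrightarrow> x < m \<Longrightarrow> y < m"
proof (induction rule: rtrancl_induct)
  case base then show ?case by simp
next
  case (step y z) then show ?case using Erel_lt[of y z] by simp
qed

lemma cls_sub: "x < m \<Longrightarrow> cls m q p x \<subseteq> {..<m}"
proof
  fix y assume "x < m" "y \<in> cls m q p x"
  then show "y \<in> {..<m}" unfolding cls_def using rtr_lt[of x y] by simp
qed

lemma cls_self: "x \<in> cls m q p x" unfolding cls_def by simp

lemma cls_q: "x < m \<Longrightarrow> q x \<in> cls m q p x"
  unfolding cls_def Erel_def by blast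
lemma cls_p: "x < m \<Longrightarrow> p x \<in> cls m q p x"
  unfolding cls_def Erel_def by blast

lemma cls_eq: assumes "y \<in> cls m q p x" shows "cls m q p y = cls m q p x"
proof (rule set_eqI)
  fix z
  have xy: "(x, y) \<in> (Erel m q p)\<^sup>*" using assms unfolding cls_def by simp
  have yx: "(y, x) \<in> (Erel m q p)\<^sup>*" using rtr_sym[OF xy] .
  show "z \<in> cls m q p y \<longleftrightarrow> z \<in> cls m q p x"
    unfolding cls_def mem_Collect_eq using rtrancl_trans[OF xy, of z] rtrancl_trans[OF yx, of z] by blast
qed

lemma cls_disj: "cls m q p x \<noteq> cls m q p y \<Longrightarrow> cls m q p x \<inter> cls m q p y = {}"
proof (rule ccontr)
  assume ne: "cls m q p x \<noteq> cls m q p y" and "cls m q p x \<inter> cls m q p y \<noteq> {}"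
  then obtain z where "z \<in> cls m q p x" "z \<in> cls m q p y" by blast
  then have "cls m q p z = cls m q p x" "cls m q p z = cls m q p y" using cls_eq by blast+
  then show False using ne by simp
qed

lemma cls_partition: "sum card (cls m q p ` {..<m}) = m"
proof -
  have U: "\<Union>(cls m q p ` {..<m}) = {..<m}"
  proof
    show "\<Union>(cls m q p ` {..<m}) \<subseteq> {..<m}" using cls_sub by blast
    show "{..<m} \<subseteq> \<Union>(cls m q p ` {..<m})" using cls_self by blast
  qed
  have pw: "pairwise disjnt (cls m q p ` {..<m})"
    unfolding pairwise_def disjnt_def using cls_disj by blast
  have fin: "\<And>A. A \<in> cls m q p ` {..<m} \<Longrightarrow> finite A"
  proof -
    fix A assume "A \<in> cls m q p ` {..<m}"
    then obtain x where "x < m" "A = cls m q p x" by blast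
    then show "finite A" using cls_sub[of x] by (simp add: finite_subset)
  qed
  have "card (\<Union>(cls m q p ` {..<m})) = sum card (cls m q p ` {..<m})"
    by (rule card_Union_disjoint[OF pw fin])
  then show ?thesis using U by simp
qed

lemma cls_fin: "x < m \<Longrightarrow> finite (cls m q p x)"
  using cls_sub[of x] by (simp add: finite_subset)

lemma cls_card2: "x < m \<Longrightarrow> 2 \<le> card (cls m q p x)"
proof -
  assume x: "x < m"
  have "{x, q x} \<subseteq> cls m q p x" using cls_self cls_q[OF x] by blast
  moreover have "card {x, q x} = 2" using pairing_neq[OF q x] by simp
  ultimately show ?thesis using card_mono[OF cls_fin[OF x], of "{x, q x}"] by linarith
qed

end

lemma circ_diag: assumes p: "is_pairing m p" shows "m \<le> 2 * num_circles m p p"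
proof -
  have le2: "card C \<le> 2" if C: "C \<in> cls m p p ` {..<m}" for C
  proof -
    obtain x where x: "x < m" "C = cls m p p x" using C by blast
    have "cls m p p x \<subseteq> {x, p x}"
    proof
      fix y assume "y \<in> cls m p p x"
      then have "(x, y) \<in> (Erel m p p)\<^sup>*" unfolding cls_def by simp
      then show "y \<in> {x, p x}"
      proof (induction rule: rtrancl_induct)
        case base then show ?case by simp
      next
        case (step y z)
        then have "z = p y" unfolding Erel_def by blast
        then show ?case using step(3) pairing_inv[OF p] by auto
      qed
    qed
    then have "card (cls m p p x) \<le> card {x, p x}" by (rule card_mono[rotated]) simp
    also have "\<dots> \<le> 2" by (simp add: card_insert_le_m1)
    finally show ?thesis using x by simp
  qed
  have "m = sum card (cls m p p ` {..<m})" using cls_partition[OF p p] by simp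
  also have "\<dots> \<le> card (cls m p p ` {..<m}) * 2"
    using sum_bounded_above[of "cls m p p ` {..<m}" card 2] le2 by simp
  finally show ?thesis unfolding num_circles_cls by simp
qed

lemma circ_off: assumes q: "is_pairing m q" and p: "is_pairing m p" and ne: "q \<noteq> p"
  shows "2 * num_circles m q p + 1 \<le> m"
proof -
  obtain x0 where x0: "q x0 \<noteq> p x0" using ne by blast
  have x0m: "x0 < m"
  proof (rule ccontr)
    assume "\<not> x0 < m" then show False using x0 pairing_ge[OF q, of x0] pairing_ge[OF p, of x0] by simp
  qed
  let ?C = "cls m q p ` {..<m}"
  let ?c0 = "cls m q p x0"
  have fC: "finite ?C" by simp
  have c0: "?c0 \<in> ?C" using x0m by blast
  have "{x0, q x0, p x0} \<subseteq> ?c0" using cls_self[OF q p] cls_q[OF q p x0m] cls_p[OF q p x0m] by blast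
  moreover have "card {x0, q x0, p x0} = 3" using x0 pairing_neq[OF q x0m] pairing_neq[OF p x0m] by simp
  ultimately have c3: "3 \<le> card ?c0" using card_mono[OF cls_fin[OF q p x0m], of "{x0, q x0, p x0}"] by linarith
  have "sum card ?C = card ?c0 + sum card (?C - {?c0})"
    using sum.remove[OF fC c0] by simp
  moreover have "sum card (?C - {?c0}) \<ge> card (?C - {?c0}) * 2"
  proof -
    have "\<forall>C\<in>?C - {?c0}. 2 \<le> card C" using cls_card2[OF q p] by blast
    then have "sum (\<lambda>_. 2) (?C - {?c0}) \<le> sum card (?C - {?c0})" by (intro sum_mono) auto
    then show ?thesis by simp
  qed
  moreover have "card (?C - {?c0}) = card ?C - 1" using c0 fC by simp
  moreover have "card ?C \<ge> 1" using c0 fC card_0_eq[OF fC] by fastforce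
  ultimately have "sum card ?C \<ge> 2 * card ?C + 1" using c3 by linarith
  then show ?thesis using cls_partition[OF q p] unfolding num_circles_cls by simp
qed

lemma circ_lt: assumes q: "is_pairing m q" and p: "is_pairing m p" and ne: "q \<noteq> p"
  shows "num_circles m q p < num_circles m p p"
  using circ_off[OF q p ne] circ_diag[OF p] by linarith

lemma rtrancl_map_mono:
  assumes "(a, b) \<in> R\<^sup>*" and "\<And>x y. (x, y) \<in> R \<Longrightarrow> (f x, f y) \<in> S"
  shows "(f a, f b) \<in> S\<^sup>*"
  using assms(1)
proof (induction rule: rtrancl_induct)
  case base then show ?case by simp
next
  case (step y z) show ?case by (rule rtrancl_into_rtrancl[OF step.IH assms(2)[OF step.hyps(2)]])
qed

definition cnj :: "(nat \<Rightarrow> nat) \<Rightarrow> (nat \<Rightarrow> nat) \<Rightarrow> nat \<Rightarrow> nat" where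
  "cnj t p = t \<circ> p \<circ> inv t"

lemma cnj_pairing: assumes t: "t permutes {..<m}" and p: "is_pairing m p"
  shows "is_pairing m (cnj t p)"
  unfolding is_pairing_def cnj_def
proof (intro conjI allI impI)
  fix x assume x: "x < m"
  have ix: "inv t x < m" using permutes_in_image[OF permutes_inv[OF t]] x by simp
  show "(t \<circ> p \<circ> inv t) x < m" using permutes_in_image[OF t] pairing_lt[OF p ix] by simp
  show "(t \<circ> p \<circ> inv t) x \<noteq> x"
  proof
    assume "(t \<circ> p \<circ> inv t) x = x"
    then have "inv t (t (p (inv t x))) = inv t x" by simp
    then have "p (inv t x) = inv t x" using permutes_inverses(2)[OF t] by simp
    then show False using pairing_neq[OF p ix] by simp
  qed
  show "(t \<circ> p \<circ> inv t) ((t \<circ> p \<circ> inv t) x) = x"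
    using permutes_inverses[OF t] pairing_inv[OF p] by simp
next
  fix x assume x: "m \<le> x"
  then have "x \<notin> {..<m}" by simp
  then have "inv t x = x" "t x = x" using permutes_not_in[OF t] permutes_not_in[OF permutes_inv[OF t]] by auto
  then show "(t \<circ> p \<circ> inv t) x = x" using pairing_ge[OF p x] by simp
qed

lemma cnj_app: assumes t: "t permutes {..<m}" shows "cnj t p (t x) = t (p x)"
proof -
  have "inv t (t x) = x" using permutes_inverses(2)[OF t] .
  then show ?thesis unfolding cnj_def by simp
qed

lemma circ_cnj: assumes t: "t permutes {..<m}" and q: "is_pairing m q" and p: "is_pairing m p"
  shows "num_circles m (cnj t q) (cnj t p) = num_circles m q p"
proof -
  let ?q = "cnj t q" and ?p = "cnj t p"
  have it: "inv t permutes {..<m}" using permutes_inv[OF t] .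
  have tl: "t x < m \<longleftrightarrow> x < m" for x using permutes_in_image[OF t, of x] by simp
  have itl: "inv t x < m \<longleftrightarrow> x < m" for x using permutes_in_image[OF it, of x] by simp
  have E1: "(t x, t y) \<in> Erel m ?q ?p" if "(x, y) \<in> Erel m q p" for x y
  proof -
    from that consider "x < m" "y = q x" | "x < m" "y = p x" unfolding Erel_def by blast
    then show ?thesis
    proof cases
      case 1 then show ?thesis using cnj_app[OF t, of q x] tl unfolding Erel_def by auto
    next
      case 2 then show ?thesis using cnj_app[OF t, of p x] tl unfolding Erel_def by auto
    qed
  qed
  have E2: "(inv t x, inv t y) \<in> Erel m q p" if "(x, y) \<in> Erel m ?q ?p" for x y
  proof -
    from that consider "x < m" "y = ?q x" | "x < m" "y = ?p x" unfolding Erel_def by blast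
    then show ?thesis
    proof cases
      case 1 then show ?thesis using permutes_inverses(2)[OF t] itl unfolding Erel_def cnj_def by auto
    next
      case 2 then show ?thesis using permutes_inverses(2)[OF t] itl unfolding Erel_def cnj_def by auto
    qed
  qed
  have cl: "cls m ?q ?p (t x) = t ` cls m q p x" for x
  proof
    show "cls m ?q ?p (t x) \<subseteq> t ` cls m q p x"
    proof
      fix y assume "y \<in> cls m ?q ?p (t x)"
      then have "(t x, y) \<in> (Erel m ?q ?p)\<^sup>*" unfolding cls_def by simp
      then have "(inv t (t x), inv t y) \<in> (Erel m q p)\<^sup>*" by (rule rtrancl_map_mono) (rule E2)
      then have "inv t y \<in> cls m q p x" unfolding cls_def using permutes_inverses(2)[OF t] by simp
      moreover have "y = t (inv t y)" using permutes_inverses(1)[OF t] by simp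
      ultimately show "y \<in> t ` cls m q p x" by blast
    qed
    show "t ` cls m q p x \<subseteq> cls m ?q ?p (t x)"
    proof
      fix y assume "y \<in> t ` cls m q p x"
      then obtain z where z: "z \<in> cls m q p x" "y = t z" by blast
      then have "(x, z) \<in> (Erel m q p)\<^sup>*" unfolding cls_def by simp
      then have "(t x, t z) \<in> (Erel m ?q ?p)\<^sup>*" by (rule rtrancl_map_mono) (rule E1)
      then show "y \<in> cls m ?q ?p (t x)" unfolding cls_def z(2) by simp
    qed
  qed
  have "cls m ?q ?p ` {..<m} = cls m ?q ?p ` (t ` {..<m})" using permutes_image[OF t] by simp
  also have "\<dots> = (\<lambda>x. t ` cls m q p x) ` {..<m}" using cl by (simp add: image_image)
  also have "\<dots> = (image t) ` (cls m q p ` {..<m})" by (simp add: image_image)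
  finally have eq: "cls m ?q ?p ` {..<m} = (image t) ` (cls m q p ` {..<m})" .
  have "inj_on (image t) (cls m q p ` {..<m})"
    by (rule inj_onI) (simp add: inj_image_eq_iff[OF permutes_inj[OF t]])
  then have "card ((image t) ` (cls m q p ` {..<m})) = card (cls m q p ` {..<m})"
    by (rule card_image)
  then show ?thesis unfolding num_circles_cls eq by simp
qed


definition fsupp :: "('b \<Rightarrow> real) \<Rightarrow> bool" where
  "fsupp f \<longleftrightarrow> finite {g. f g \<noteq> 0}"

definition Kop :: "('b \<Rightarrow> 'c \<Rightarrow> real) \<Rightarrow> ('b \<Rightarrow> real) \<Rightarrow> 'c \<Rightarrow> real" where
  "Kop K f = (\<lambda>s. \<Sum>g\<in>{g. f g \<noteq> 0}. f g * K g s)"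

lemma M_op_Kop: "M_op n m = Kop (M_gen n m)"
  unfolding M_op_def Kop_def by (rule ext) simp

lemma Kop_eq: assumes "finite T" "{g. f g \<noteq> 0} \<subseteq> T"
  shows "Kop K f s = (\<Sum>g\<in>T. f g * K g s)"
  unfolding Kop_def by (rule sum.mono_neutral_left) (use assms in auto)

lemma fsupp_add: "fsupp f \<Longrightarrow> fsupp h \<Longrightarrow> fsupp (\<lambda>s. f s + h s)"
  unfolding fsupp_def by (rule finite_subset[of _ "{g. f g \<noteq> 0} \<union> {g. h g \<noteq> 0}"]) auto
lemma fsupp_scale: "fsupp f \<Longrightarrow> fsupp (\<lambda>s. a * f s)"
  unfolding fsupp_def by (rule finite_subset[of _ "{g. f g \<noteq> 0}"]) auto
lemma fsupp_diff: "fsupp f \<Longrightarrow> fsupp h \<Longrightarrow> fsupp (\<lambda>s. f s - h s)"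
  unfolding fsupp_def by (rule finite_subset[of _ "{g. f g \<noteq> 0} \<union> {g. h g \<noteq> 0}"]) auto
lemma fsupp_delta: "fsupp (delta g)"
  unfolding fsupp_def delta_def by (rule finite_subset[of _ "{g}"]) auto
lemma fsupp_zero: "fsupp (\<lambda>s. 0)" unfolding fsupp_def by simp
lemma fsupp_sum: assumes A: "finite A" and F: "\<And>i. i \<in> A \<Longrightarrow> fsupp (F i)"
  shows "fsupp (\<lambda>s. \<Sum>i\<in>A. a i * F i s)"
  using A F
proof (induction A rule: finite_induct)
  case empty then show ?case by (simp add: fsupp_zero)
next
  case (insert x A)
  have "fsupp (\<lambda>s. a x * F x s + (\<Sum>i\<in>A. a i * F i s))"
    using insert by (intro fsupp_add fsupp_scale) auto
  then show ?case using insert by simp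
qed

lemma Kop_add: assumes f: "fsupp f" and h: "fsupp h"
  shows "Kop K (\<lambda>s. f s + h s) = (\<lambda>s. Kop K f s + Kop K h s)"
proof
  fix s
  let ?T = "{g. f g \<noteq> 0} \<union> {g. h g \<noteq> 0}"
  have fT: "finite ?T" using f h unfolding fsupp_def by simp
  have "Kop K (\<lambda>s. f s + h s) s = (\<Sum>g\<in>?T. (f g + h g) * K g s)" by (rule Kop_eq[OF fT]) auto
  also have "\<dots> = (\<Sum>g\<in>?T. f g * K g s) + (\<Sum>g\<in>?T. h g * K g s)"
    by (simp add: distrib_right sum.distrib)
  also have "(\<Sum>g\<in>?T. f g * K g s) = Kop K f s" by (rule Kop_eq[OF fT, symmetric]) auto
  also have "(\<Sum>g\<in>?T. h g * K g s) = Kop K h s" by (rule Kop_eq[OF fT, symmetric]) auto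
  finally show "Kop K (\<lambda>s. f s + h s) s = Kop K f s + Kop K h s" .
qed

lemma Kop_scale: assumes f: "fsupp f"
  shows "Kop K (\<lambda>s. a * f s) = (\<lambda>s. a * Kop K f s)"
proof
  fix s
  let ?T = "{g. f g \<noteq> 0}"
  have fT: "finite ?T" using f unfolding fsupp_def by simp
  have "Kop K (\<lambda>s. a * f s) s = (\<Sum>g\<in>?T. (a * f g) * K g s)" by (rule Kop_eq[OF fT]) auto
  also have "\<dots> = a * (\<Sum>g\<in>?T. f g * K g s)" by (simp add: sum_distrib_left mult.assoc)
  also have "(\<Sum>g\<in>?T. f g * K g s) = Kop K f s" by (rule Kop_eq[OF fT, symmetric]) auto
  finally show "Kop K (\<lambda>s. a * f s) s = a * Kop K f s" .
qed

lemma Kop_zero: "Kop K (\<lambda>s. 0) = (\<lambda>s. 0)" unfolding Kop_def by simp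

lemma Kop_diff: assumes f: "fsupp f" and h: "fsupp h"
  shows "Kop K (\<lambda>s. f s - h s) = (\<lambda>s. Kop K f s - Kop K h s)"
proof -
  have "Kop K (\<lambda>s. f s + (-1) * h s) = (\<lambda>s. Kop K f s + Kop K (\<lambda>s. (-1) * h s) s)"
    by (rule Kop_add[OF f fsupp_scale[OF h]])
  also have "Kop K (\<lambda>s. (-1) * h s) = (\<lambda>s. (-1) * Kop K h s)" by (rule Kop_scale[OF h])
  finally show ?thesis by simp
qed

lemma Kop_sum: assumes A: "finite A" and F: "\<And>i. i \<in> A \<Longrightarrow> fsupp (F i)"
  shows "Kop K (\<lambda>s. \<Sum>i\<in>A. a i * F i s) = (\<lambda>s. \<Sum>i\<in>A. a i * Kop K (F i) s)"
  using A F
proof (induction A rule: finite_induct)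
  case empty then show ?case by (simp add: Kop_zero)
next
  case (insert x A)
  have fA: "fsupp (\<lambda>s. \<Sum>i\<in>A. a i * F i s)" using insert by (intro fsupp_sum) auto
  have fx: "fsupp (\<lambda>s. a x * F x s)" using insert by (intro fsupp_scale) auto
  have "Kop K (\<lambda>s. \<Sum>i\<in>insert x A. a i * F i s) = Kop K (\<lambda>s. a x * F x s + (\<Sum>i\<in>A. a i * F i s))"
    using insert by simp
  also have "\<dots> = (\<lambda>s. Kop K (\<lambda>s. a x * F x s) s + Kop K (\<lambda>s. \<Sum>i\<in>A. a i * F i s) s)"
    by (rule Kop_add[OF fx fA])
  also have "\<dots> = (\<lambda>s. a x * Kop K (F x) s + (\<Sum>i\<in>A. a i * Kop K (F i) s))"
    using insert Kop_scale[of "F x" K "a x"] by simp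
  finally show ?case using insert by simp
qed

lemma Kop_delta: "Kop K (delta g) = K g"
proof
  fix s
  have "Kop K (delta g) s = (\<Sum>h\<in>{g}. delta g h * K h s)"
    by (rule Kop_eq) (auto simp: delta_def)
  then show "Kop K (delta g) s = K g s" by (simp add: delta_def)
qed

lemma fsupp_Kop: assumes f: "fsupp f" and K: "\<And>g. fsupp (K g)"
  shows "fsupp (Kop K f)"
proof -
  have "fsupp (\<lambda>s. \<Sum>g\<in>{g. f g \<noteq> 0}. f g * K g s)"
    by (rule fsupp_sum) (use f K in \<open>auto simp: fsupp_def\<close>)
  then show ?thesis unfolding Kop_def .
qed

lemma lcc_Kop_fspan: assumes X: "lcc X" and G: "\<And>r. r \<in> G \<Longrightarrow> fsupp r \<and> Kop K r \<in> X"
  shows "f \<in> fspan G \<Longrightarrow> Kop K f \<in> X \<and> fsupp f"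
proof -
  assume "f \<in> fspan G"
  then obtain T c where T: "finite T" "T \<subseteq> G" "f = (\<lambda>s. \<Sum>g\<in>T. c g * g s)"
    unfolding fspan_def by auto
  have fs: "\<And>g. g \<in> T \<Longrightarrow> fsupp g" using G T(2) by blast
  have "Kop K f = (\<lambda>s. \<Sum>g\<in>T. c g * Kop K g s)" unfolding T(3) by (rule Kop_sum[OF T(1) fs])
  moreover have "(\<lambda>s. \<Sum>g\<in>T. c g * Kop K g s) \<in> X"
    by (rule lcc_sum[OF X T(1)]) (use G T(2) in blast)
  moreover have "fsupp f" unfolding T(3) by (rule fsupp_sum[OF T(1) fs])
  ultimately show ?thesis by simp
qed


definition Ifin :: "nat \<Rightarrow> ((nat \<Rightarrow> nat) \<times> nat set) set" where
  "Ifin m = {(q, S). is_pairing m q \<and> orient m q S}"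

definition mkg :: "'a ograph \<Rightarrow> (nat \<Rightarrow> nat) \<times> nat set \<Rightarrow> 'a ograph" where
  "mkg g i = OGraph (fst i) (gvtx g) (snd i) (glab g) (gcol g)"

definition wt :: "nat \<Rightarrow> nat \<Rightarrow> (nat \<Rightarrow> nat) \<Rightarrow> (nat \<Rightarrow> nat) \<Rightarrow> real" where
  "wt n m q p = (2 * real n) ^ num_circles m q p"

definition Bc :: "nat \<Rightarrow> nat \<Rightarrow> (nat \<Rightarrow> nat) \<times> nat set \<Rightarrow> (nat \<Rightarrow> nat) \<times> nat set \<Rightarrow> real" where
  "Bc n m i j = (if is_pairing m (fst j) \<and> snd j = {..<m} - cd m (fst i) (fst j)
      then wt n m (fst i) (fst j) * sg (card (snd i - cd m (fst i) (fst j))) else 0)"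

definition lift :: "nat \<Rightarrow> 'a ograph \<Rightarrow> ((nat \<Rightarrow> nat) \<times> nat set \<Rightarrow> real) \<Rightarrow> 'a ograph \<Rightarrow> real" where
  "lift m g v = (\<lambda>s. \<Sum>i\<in>Ifin m. v i * delta (mkg g i) s)"

definition bt :: "nat \<Rightarrow> nat \<Rightarrow> ((nat \<Rightarrow> nat) \<times> nat set \<Rightarrow> real) \<Rightarrow> (nat \<Rightarrow> nat) \<times> nat set \<Rightarrow> real" where
  "bt n m v = (\<lambda>j. \<Sum>i\<in>Ifin m. v i * Bc n m i j)"

lemma finite_Ors: "finite {S. orient m q S}"
  by (rule finite_subset[of _ "Pow {..<m}"]) (auto simp: orient_def)

lemma finite_Ifin: "finite (Ifin m)"
proof -
  have "Ifin m \<subseteq> {p. is_pairing m p} \<times> Pow {..<m}" unfolding Ifin_def orient_def by auto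
  moreover have "finite ({p. is_pairing m p} \<times> Pow {..<m})" using finite_Prs by simp
  ultimately show ?thesis by (rule finite_subset)
qed

lemma Ifin_iff: "(q, S) \<in> Ifin m \<longleftrightarrow> is_pairing m q \<and> orient m q S" unfolding Ifin_def by simp

lemma sum_delta_mult: assumes "finite A" "a \<in> A" shows "(\<Sum>k\<in>A. delta a k * X k) = X a"
proof -
  have "(\<Sum>k\<in>A. delta a k * X k) = (\<Sum>k\<in>A. if k = a then X k else 0)"
    by (rule sum.cong) (auto simp: delta_def)
  also have "\<dots> = X a" using assms by (simp add: sum.delta')
  finally show ?thesis .
qed

lemma sum_delta_mult': assumes "finite A" "a \<in> A" shows "(\<Sum>k\<in>A. X k * delta (f k) s) = (\<Sum>k\<in>{k\<in>A. f k = s}. X k)"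
proof -
  have "(\<Sum>k\<in>A. X k * delta (f k) s) = (\<Sum>k\<in>A. if f k = s then X k else 0)"
    by (rule sum.cong) (auto simp: delta_def)
  also have "\<dots> = (\<Sum>k\<in>{k\<in>A. f k = s}. X k)" using assms by (simp add: sum.inter_filter)
  finally show ?thesis .
qed

lemma regluing_mkg: "regluing m (mkg g (q, S)) p = mkg g (p, {..<m} - cd m q p)"
  unfolding regluing_def mkg_def coherent_dirs_cd by simp

lemma regluing_sign_mkg: "regluing_sign m (mkg g (q, S)) p = sg (card (S - cd m q p))"
  unfolding regluing_sign_def mkg_def coherent_dirs_cd sg_def by simp

lemma M_gen_mkg: "M_gen n m (mkg g (q, S)) =
   (\<lambda>s. \<Sum>p\<in>{p. is_pairing m p}. wt n m q p * sg (card (S - cd m q p)) * delta (mkg g (p, {..<m} - cd m q p)) s)"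
proof -
  have "gpair (mkg g (q, S)) = q" unfolding mkg_def by simp
  then show ?thesis unfolding M_gen_def regluing_mkg regluing_sign_mkg wt_def by simp
qed

lemma M_gen_lift: assumes i: "i \<in> Ifin m" shows "M_gen n m (mkg g i) = lift m g (Bc n m i)"
proof
  fix s
  obtain q S where iqs: "i = (q, S)" by (cases i)
  have q: "is_pairing m q" using i iqs Ifin_iff by auto
  define h where "h p = (p, {..<m} - cd m q p)" for p
  have hI: "h ` {p. is_pairing m p} \<subseteq> Ifin m"
    unfolding h_def Ifin_def using cd_orient2[OF q] by auto
  have hinj: "inj_on h {p. is_pairing m p}" unfolding h_def by (rule inj_onI) simp
  have z: "Bc n m i j * delta (mkg g j) s = 0" if "j \<in> Ifin m - h ` {p. is_pairing m p}" for j
  proof -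
    obtain p T where j: "j = (p, T)" by (cases j)
    have "\<not> (is_pairing m p \<and> T = {..<m} - cd m q p)"
      using that unfolding j h_def by auto
    then show ?thesis unfolding Bc_def j iqs by auto
  qed
  have "lift m g (Bc n m i) s = (\<Sum>j\<in>Ifin m. Bc n m i j * delta (mkg g j) s)" unfolding lift_def ..
  also have "\<dots> = (\<Sum>j\<in>h ` {p. is_pairing m p}. Bc n m i j * delta (mkg g j) s)"
    by (rule sum.mono_neutral_right[OF finite_Ifin hI]) (use z in blast)
  also have "\<dots> = (\<Sum>p\<in>{p. is_pairing m p}. Bc n m i (h p) * delta (mkg g (h p)) s)"
    by (rule sum.reindex[OF hinj, unfolded o_def])
  also have "\<dots> = (\<Sum>p\<in>{p. is_pairing m p}. wt n m q p * sg (card (S - cd m q p)) * delta (mkg g (p, {..<m} - cd m q p)) s)"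
    by (rule sum.cong) (auto simp: Bc_def h_def iqs)
  also have "\<dots> = M_gen n m (mkg g i) s" unfolding iqs M_gen_mkg ..
  finally show "M_gen n m (mkg g i) s = lift m g (Bc n m i) s" by simp
qed

lemma fsupp_lift: "fsupp (lift m g v)"
  unfolding lift_def by (rule fsupp_sum[OF finite_Ifin]) (rule fsupp_delta)

lemma lift_delta: "i \<in> Ifin m \<Longrightarrow> lift m g (delta i) = delta (mkg g i)"
  unfolding lift_def by (rule ext) (simp add: sum_delta_mult[OF finite_Ifin])

lemma lift_sum: assumes "finite A"
  shows "lift m g (\<lambda>j. \<Sum>r\<in>A. a r * F r j) = (\<lambda>s. \<Sum>r\<in>A. a r * lift m g (F r) s)"
  unfolding lift_def
  by (rule ext) (simp add: sum_distrib_right sum_distrib_left mult.assoc sum.swap[of _ "Ifin m" A])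

lemma lift_add: "lift m g (\<lambda>j. v j + w j) = (\<lambda>s. lift m g v s + lift m g w s)"
  unfolding lift_def by (rule ext) (simp add: distrib_right sum.distrib)
lemma lift_scale: "lift m g (\<lambda>j. a * v j) = (\<lambda>s. a * lift m g v s)"
  unfolding lift_def by (rule ext) (simp add: sum_distrib_left mult.assoc)
lemma lift_diff: "lift m g (\<lambda>j. v j - w j) = (\<lambda>s. lift m g v s - lift m g w s)"
  unfolding lift_def by (rule ext) (simp add: left_diff_distrib sum_subtractf)

lemma bt_sum: assumes "finite A"
  shows "bt n m (\<lambda>j. \<Sum>r\<in>A. a r * F r j) = (\<lambda>j. \<Sum>r\<in>A. a r * bt n m (F r) j)"
  unfolding bt_def
  by (rule ext) (simp add: sum_distrib_right sum_distrib_left mult.assoc sum.swap[of _ "Ifin m" A])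
lemma bt_add: "bt n m (\<lambda>j. v j + w j) = (\<lambda>j. bt n m v j + bt n m w j)"
  unfolding bt_def by (rule ext) (simp add: distrib_right sum.distrib)
lemma bt_scale: "bt n m (\<lambda>j. a * v j) = (\<lambda>j. a * bt n m v j)"
  unfolding bt_def by (rule ext) (simp add: sum_distrib_left mult.assoc)
lemma bt_diff: "bt n m (\<lambda>j. v j - w j) = (\<lambda>j. bt n m v j - bt n m w j)"
  unfolding bt_def by (rule ext) (simp add: left_diff_distrib sum_subtractf)
lemma bt_delta: "i \<in> Ifin m \<Longrightarrow> bt n m (delta i) = Bc n m i"
  unfolding bt_def by (rule ext) (simp add: sum_delta_mult[OF finite_Ifin])

lemma M_op_lift: "M_op n m (lift m g v) = lift m g (bt n m v)"
proof -
  have "M_op n m (lift m g v) = (\<lambda>s. \<Sum>i\<in>Ifin m. v i * Kop (M_gen n m) (delta (mkg g i)) s)"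
    unfolding M_op_Kop lift_def by (rule Kop_sum[OF finite_Ifin fsupp_delta])
  also have "\<dots> = (\<lambda>s. \<Sum>i\<in>Ifin m. v i * lift m g (Bc n m i) s)"
    unfolding Kop_delta by (rule ext, rule sum.cong) (simp_all add: M_gen_lift)
  also have "\<dots> = lift m g (\<lambda>j. \<Sum>i\<in>Ifin m. v i * Bc n m i j)"
    by (rule lift_sum[OF finite_Ifin, symmetric])
  finally show ?thesis unfolding bt_def .
qed

lemma M_op_pow_lift: "(M_op n m ^^ j) (lift m g v) = lift m g ((bt n m ^^ j) v)"
  by (induction j) (simp_all add: M_op_lift)

lemma Bc_supp: assumes "i \<in> Ifin m" "Bc n m i j \<noteq> 0" shows "j \<in> Ifin m"
proof -
  obtain q S where i: "i = (q, S)" by (cases i)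
  obtain p T where j: "j = (p, T)" by (cases j)
  have q: "is_pairing m q" using assms(1) i Ifin_iff by auto
  have "is_pairing m p" "T = {..<m} - cd m q p" using assms(2) unfolding Bc_def i j by (auto split: if_splits)
  then show ?thesis unfolding j Ifin_iff using cd_orient2[OF q] by simp
qed

lemma bt_U: assumes j: "j \<notin> Ifin m" shows "bt n m v j = 0"
  unfolding bt_def
proof (rule sum.neutral, intro ballI)
  fix i assume i: "i \<in> Ifin m"
  have "Bc n m i j = 0" using Bc_supp[OF i] j by blast
  then show "v i * Bc n m i j = 0" by simp
qed

lemma valid_mkg: assumes g: "valid_ograph Op k m g" and i: "i \<in> Ifin m"
  shows "valid_ograph Op k m (mkg g i)"
proof -
  obtain q S where iqs: "i = (q, S)" by (cases i)
  have q: "is_pairing m q" and S: "orient m q S" using i iqs Ifin_iff by auto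
  have val: "valence m (mkg g i) v = valence m g v" for v unfolding valence_def mkg_def by simp
  show ?thesis using g q S unfolding valid_ograph_def val unfolding mkg_def iqs orient_def
    by (simp add: valence_def)
qed

lemma valid_Ifin: "valid_ograph Op k m g \<Longrightarrow> (gpair g, gst g) \<in> Ifin m"
  unfolding valid_ograph_def Ifin_iff orient_def by blast

lemma mkg_self: "mkg g (gpair g, gst g) = g" unfolding mkg_def by (cases g) simp
lemma mkg_mkg: "mkg (mkg g i) j = mkg g j" unfolding mkg_def by simp
lemma mkg_inj: "mkg g i = mkg g j \<Longrightarrow> i = j" unfolding mkg_def by (cases i, cases j) simp

lemma flip_edge_mkg: "flip_edge (mkg g (q, S)) x = mkg g (q, flipS q S x)"
  unfolding flip_edge_def mkg_def flipS_def by simp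


definition flipgens :: "nat \<Rightarrow> (((nat \<Rightarrow> nat) \<times> nat set) \<Rightarrow> real) set" where
  "flipgens m = {(\<lambda>j. delta i j + delta (fst i, flipS (fst i) (snd i) x) j) | i x. i \<in> Ifin m \<and> x < m}"

definition UF :: "nat \<Rightarrow> (((nat \<Rightarrow> nat) \<times> nat set) \<Rightarrow> real) set" where
  "UF m = fspan (flipgens m)"

definition phi :: "nat \<Rightarrow> ((nat \<Rightarrow> nat) \<times> nat set \<Rightarrow> real) \<Rightarrow> (nat \<Rightarrow> nat) \<Rightarrow> real" where
  "phi m v q = (\<Sum>S\<in>{S. orient m q S}. sg (card (S - ocan m q)) * v (q, S))"

lemma lcc_UF: "lcc (UF m)" unfolding UF_def by (rule fspan_lcc)

lemma flipgen_in_Ifin: assumes i: "i \<in> Ifin m" and x: "x < m"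
  shows "(fst i, flipS (fst i) (snd i) x) \<in> Ifin m"
proof -
  obtain q S where iqs: "i = (q, S)" by (cases i)
  have q: "is_pairing m q" and S: "orient m q S" using i iqs Ifin_iff by auto
  show ?thesis using flipS_orient(1)[OF q S x] q unfolding iqs Ifin_iff by simp
qed

lemma bt_flipgen: assumes r: "r \<in> flipgens m" shows "bt n m r = (\<lambda>j. 0)"
proof -
  obtain i x where ix: "i \<in> Ifin m" "x < m" and r: "r = (\<lambda>j. delta i j + delta (fst i, flipS (fst i) (snd i) x) j)"
    using r unfolding flipgens_def by blast
  obtain q S where iqs: "i = (q, S)" by (cases i)
  have q: "is_pairing m q" and S: "orient m q S" using ix iqs Ifin_iff by auto
  have i2: "(q, flipS q S x) \<in> Ifin m" using flipgen_in_Ifin[OF ix] iqs by simp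
  have "bt n m r = (\<lambda>j. bt n m (delta i) j + bt n m (delta (q, flipS q S x)) j)"
    unfolding r iqs by (simp add: bt_add)
  also have "\<dots> = (\<lambda>j. Bc n m (q, S) j + Bc n m (q, flipS q S x) j)"
    using bt_delta ix(1) i2 iqs by simp
  also have "\<dots> = (\<lambda>j. 0)"
  proof
    fix j :: "(nat \<Rightarrow> nat) \<times> nat set"
    obtain p T where j: "j = (p, T)" by (cases j)
    show "Bc n m (q, S) j + Bc n m (q, flipS q S x) j = 0"
    proof (cases "is_pairing m p \<and> T = {..<m} - cd m q p")
      case True
      then have p: "is_pairing m p" by simp
      have "sg (card (flipS q S x - cd m q p)) = - sg (card (S - cd m q p))"
        by (rule flipS_sign[OF q S cd_orient[OF q p] ix(2)])
      then show ?thesis unfolding Bc_def j using True by simp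
    next
      case False then show ?thesis unfolding Bc_def j by auto
    qed
  qed
  finally show ?thesis .
qed

lemma lcc_bt0: "lcc {v. bt n m v = (\<lambda>j. 0)}"
  unfolding lcc_def
proof (intro conjI ballI allI)
  show "(\<lambda>s. 0) \<in> {v. bt n m v = (\<lambda>j. 0)}" unfolding bt_def by simp
next
  fix f h assume "f \<in> {v. bt n m v = (\<lambda>j. 0)}" "h \<in> {v. bt n m v = (\<lambda>j. 0)}"
  then show "(\<lambda>s. f s + h s) \<in> {v. bt n m v = (\<lambda>j. 0)}" by (simp add: bt_add)
next
  fix f a assume "f \<in> {v. bt n m v = (\<lambda>j. 0)}"
  then show "(\<lambda>s. a * f s) \<in> {v. bt n m v = (\<lambda>j. 0)}" by (simp add: bt_scale)
qed

lemma bt_UF: "v \<in> UF m \<Longrightarrow> bt n m v = (\<lambda>j. 0)"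
  using fspan_sub[OF lcc_bt0, of "flipgens m" n m] bt_flipgen unfolding UF_def by blast

lemma og_rel_lcc: "lcc (og_rel Op act k m)" unfolding og_rel_def by (rule fspan_lcc)

lemma lift_UF: assumes g: "valid_ograph Op k m g" and v: "v \<in> UF m"
  shows "lift m g v \<in> og_rel Op act k m"
proof -
  let ?X = "{v. lift m g v \<in> og_rel Op act k m}"
  have X: "lcc ?X"
    unfolding lcc_def
  proof (intro conjI ballI allI)
    show "(\<lambda>s. 0) \<in> ?X" unfolding lift_def using lcc_zero[OF og_rel_lcc] by simp
  next
    fix f h assume "f \<in> ?X" "h \<in> ?X"
    then show "(\<lambda>s. f s + h s) \<in> ?X" by (simp add: lift_add lcc_add[OF og_rel_lcc])
  next
    fix f a assume "f \<in> ?X"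
    then show "(\<lambda>s. a * f s) \<in> ?X" by (simp add: lift_scale lcc_scale[OF og_rel_lcc])
  qed
  have G: "flipgens m \<subseteq> ?X"
  proof
    fix r assume r: "r \<in> flipgens m"
    obtain i x where ix: "i \<in> Ifin m" "x < m" and r: "r = (\<lambda>j. delta i j + delta (fst i, flipS (fst i) (snd i) x) j)"
      using r unfolding flipgens_def by blast
    obtain q S where iqs: "i = (q, S)" by (cases i)
    have i2: "(q, flipS q S x) \<in> Ifin m" using flipgen_in_Ifin[OF ix] iqs by simp
    have d1: "lift m g (delta (q, S)) = delta (mkg g (q, S))" using lift_delta[of "(q, S)"] ix(1) iqs by simp
    have d2: "lift m g (delta (q, flipS q S x)) = delta (mkg g (q, flipS q S x))" using lift_delta[OF i2] .
    have r2: "r = (\<lambda>j. delta (q, S) j + delta (q, flipS q S x) j)" using r iqs by simp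
    have "lift m g r = (\<lambda>s. delta (mkg g (q, S)) s + delta (mkg g (q, flipS q S x)) s)"
      unfolding r2 lift_add d1 d2 ..
    also have "\<dots> = (\<lambda>s. delta (mkg g (q, S)) s + delta (flip_edge (mkg g (q, S)) x) s)"
      by (simp add: flip_edge_mkg)
    finally have e: "lift m g r = (\<lambda>s. delta (mkg g (q, S)) s + delta (flip_edge (mkg g (q, S)) x) s)" .
    have "valid_ograph Op k m (mkg g (q, S))" using valid_mkg[OF g ix(1)] iqs by simp
    then have "(\<lambda>s. delta (mkg g (q, S)) s + delta (flip_edge (mkg g (q, S)) x) s) \<in> og_relations Op act k m"
      unfolding og_relations_def using ix(2) by blast
    then have "lift m g r \<in> og_rel Op act k m" unfolding e og_rel_def by (rule fspan_gen)
    then show "r \<in> ?X" by simp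
  qed
  show ?thesis using fspan_sub[OF X G] v unfolding UF_def by blast
qed

lemma phi_add: "phi m (\<lambda>j. v j + w j) q = phi m v q + phi m w q"
  unfolding phi_def by (simp add: distrib_left sum.distrib)
lemma phi_scale: "phi m (\<lambda>j. a * v j) q = a * phi m v q"
  unfolding phi_def by (simp add: sum_distrib_left mult.left_commute)

lemma phi_delta: "phi m (delta i) q = (if fst i = q \<and> orient m q (snd i) then sg (card (snd i - ocan m q)) else 0)"
proof -
  have "phi m (delta i) q = (\<Sum>S\<in>{S. orient m q S}. if S = snd i \<and> fst i = q then sg (card (S - ocan m q)) else 0)"
    unfolding phi_def by (rule sum.cong) (auto simp: delta_def)
  also have "\<dots> = (if fst i = q \<and> orient m q (snd i) then sg (card (snd i - ocan m q)) else 0)"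
  proof (cases "fst i = q")
    case True then show ?thesis using finite_Ors by (simp add: sum.delta')
  next
    case False then show ?thesis by simp
  qed
  finally show ?thesis .
qed

lemma phi_flipgen: assumes r: "r \<in> flipgens m" shows "phi m r q = 0"
proof -
  obtain i x where ix: "i \<in> Ifin m" "x < m" and r: "r = (\<lambda>j. delta i j + delta (fst i, flipS (fst i) (snd i) x) j)"
    using r unfolding flipgens_def by blast
  obtain q0 S where iqs: "i = (q0, S)" by (cases i)
  have q0: "is_pairing m q0" and S: "orient m q0 S" using ix iqs Ifin_iff by auto
  have S2: "orient m q0 (flipS q0 S x)" using flipS_orient(1)[OF q0 S ix(2)] .
  have "phi m r q = phi m (delta (q0, S)) q + phi m (delta (q0, flipS q0 S x)) q"
    unfolding r iqs by (simp add: phi_add)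
  also have "\<dots> = 0"
  proof (cases "q0 = q")
    case True
    have "sg (card (flipS q0 S x - ocan m q0)) = - sg (card (S - ocan m q0))"
      by (rule flipS_sign[OF q0 S ocan_orient[OF q0] ix(2)])
    then show ?thesis unfolding phi_delta using True S S2 by simp
  next
    case False then show ?thesis unfolding phi_delta by simp
  qed
  finally show ?thesis .
qed

lemma phi_UF: assumes v: "v \<in> UF m" shows "phi m v q = 0"
proof -
  let ?X = "{v. \<forall>q. phi m v q = 0}"
  have X: "lcc ?X"
    unfolding lcc_def
  proof (intro conjI ballI allI)
    show "(\<lambda>s. 0) \<in> ?X" unfolding phi_def by simp
  next
    fix f h assume "f \<in> ?X" "h \<in> ?X"
    then show "(\<lambda>s. f s + h s) \<in> ?X" by (simp add: phi_add)
  next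
    fix f a assume "f \<in> ?X"
    then show "(\<lambda>s. a * f s) \<in> ?X" by (simp add: phi_scale)
  qed
  have G: "flipgens m \<subseteq> ?X" using phi_flipgen by blast
  show ?thesis using fspan_sub[OF X G] v unfolding UF_def by blast
qed

lemma flipgen_mem: "(q, S) \<in> Ifin m \<Longrightarrow> x < m \<Longrightarrow> (\<lambda>j. delta (q, S) j + delta (q, flipS q S x) j) \<in> UF m"
  unfolding UF_def by (rule fspan_gen) (unfold flipgens_def, rule CollectI, rule exI[of _ "(q, S)"], rule exI[of _ x], simp)

lemma chain_UF: assumes q: "is_pairing m q"
  shows "orient m q S \<Longrightarrow> card (S - ocan m q) = k \<Longrightarrow>
    (\<lambda>j. delta (q, S) j - sg (card (S - ocan m q)) * delta (q, ocan m q) j) \<in> UF m"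
proof (induction k arbitrary: S)
  case 0
  have o: "orient m q (ocan m q)" by (rule ocan_orient[OF q])
  have "finite (S - ocan m q)" using orient_fin[OF 0(1)] by simp
  then have "S \<subseteq> ocan m q" using 0(2) by simp
  moreover have "ocan m q \<subseteq> S"
  proof
    fix y assume y: "y \<in> ocan m q"
    have ym: "y < m" using orient_sub[OF o] y by auto
    show "y \<in> S"
    proof (rule ccontr)
      assume "y \<notin> S"
      then have "q y \<in> S" using 0(1) ym unfolding orient_def by blast
      moreover have "q y \<notin> ocan m q" using o ym y unfolding orient_def by blast
      ultimately show False using \<open>S \<subseteq> ocan m q\<close> by blast
    qed
  qed
  ultimately have "S = ocan m q" by blast
  then have "(\<lambda>j. delta (q, S) j - sg (card (S - ocan m q)) * delta (q, ocan m q) j) = (\<lambda>j. 0)"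
    by (simp add: sg_def)
  then show ?case using lcc_zero[OF lcc_UF] by simp
next
  case (Suc k)
  have o: "orient m q (ocan m q)" by (rule ocan_orient[OF q])
  have "S - ocan m q \<noteq> {}"
  proof
    assume e: "S - ocan m q = {}" have "card (S - ocan m q) = 0" unfolding e by simp
    with Suc(3) show False by simp
  qed
  then obtain x where x: "x \<in> S" "x \<notin> ocan m q" by blast
  have xm: "x < m" using orient_sub[OF Suc(2)] x by auto
  have qxS: "q x \<notin> S" using Suc(2) xm x unfolding orient_def by blast
  have qxo: "q x \<in> ocan m q" using o xm x unfolding orient_def by blast
  define S' where "S' = flipS q S x"
  have S': "orient m q S'" unfolding S'_def by (rule flipS_orient(1)[OF q Suc(2) xm])
  have "S' = (S - {x}) \<union> {q x}" unfolding S'_def flipS_def using x qxS by auto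
  then have "S' - ocan m q = (S - ocan m q) - {x}" using qxo by auto
  then have cS': "card (S' - ocan m q) = k" using Suc(3) x orient_fin[OF Suc(2)] by simp
  have IH: "(\<lambda>j. delta (q, S') j - sg (card (S' - ocan m q)) * delta (q, ocan m q) j) \<in> UF m"
    by (rule Suc.IH[OF S' cS'])
  have sgn: "sg (card (S' - ocan m q)) = - sg (card (S - ocan m q))"
    unfolding S'_def by (rule flipS_sign[OF q Suc(2) o xm])
  have gen: "(\<lambda>j. delta (q, S) j + delta (q, S') j) \<in> UF m"
    unfolding S'_def by (rule flipgen_mem) (use q Suc(2) xm in \<open>simp_all add: Ifin_iff\<close>)
  have "(\<lambda>j. (delta (q, S) j + delta (q, S') j) - (delta (q, S') j - sg (card (S' - ocan m q)) * delta (q, ocan m q) j)) \<in> UF m"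
    by (rule lcc_diff[OF lcc_UF gen IH])
  then show ?case using sgn by (simp add: algebra_simps)
qed

lemma U_expand: assumes v: "\<And>j. j \<notin> Ifin m \<Longrightarrow> v j = 0"
  shows "v = (\<lambda>j. \<Sum>i\<in>Ifin m. v i * delta i j)"
proof
  fix j
  show "v j = (\<Sum>i\<in>Ifin m. v i * delta i j)"
  proof (cases "j \<in> Ifin m")
    case True
    have "(\<Sum>i\<in>Ifin m. v i * delta i j) = (\<Sum>i\<in>Ifin m. if i = j then v i else 0)"
      by (rule sum.cong) (auto simp: delta_def)
    then show ?thesis using True finite_Ifin by (simp add: sum.delta)
  next
    case False
    have "(\<Sum>i\<in>Ifin m. v i * delta i j) = 0"
      by (rule sum.neutral) (use False in \<open>auto simp: delta_def\<close>)
    then show ?thesis using False v by simp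
  qed
qed

lemma Ifin_Sigma: "Ifin m = Sigma {p. is_pairing m p} (\<lambda>q. {S. orient m q S})"
  unfolding Ifin_def by auto

lemma sum_Ifin: "(\<Sum>i\<in>Ifin m. f i) = (\<Sum>q\<in>{p. is_pairing m p}. \<Sum>S\<in>{S. orient m q S}. f (q, S))"
proof -
  have "(\<Sum>q\<in>{p. is_pairing m p}. \<Sum>S\<in>{S. orient m q S}. f (q, S))
     = (\<Sum>(q, S)\<in>Sigma {p. is_pairing m p} (\<lambda>q. {S. orient m q S}). f (q, S))"
    by (rule sum.Sigma) (use finite_Prs finite_Ors in auto)
  then show ?thesis unfolding Ifin_Sigma by (simp add: case_prod_eta)
qed

lemma phi0_UF: assumes v: "\<And>j. j \<notin> Ifin m \<Longrightarrow> v j = 0"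
  and ph: "\<And>q. is_pairing m q \<Longrightarrow> phi m v q = 0"
  shows "v \<in> UF m"
proof -
  define ch where "ch i = (\<lambda>j. delta i j - sg (card (snd i - ocan m (fst i))) * delta (fst i, ocan m (fst i)) j)" for i
  have chU: "ch i \<in> UF m" if "i \<in> Ifin m" for i
  proof -
    obtain q S where iqs: "i = (q, S)" by (cases i)
    have q: "is_pairing m q" and S: "orient m q S" using that iqs Ifin_iff by auto
    show ?thesis unfolding ch_def iqs using chain_UF[OF q S refl] by simp
  qed
  have R: "(\<lambda>j. \<Sum>i\<in>Ifin m. v i * ch i j) \<in> UF m"
    by (rule lcc_sum[OF lcc_UF finite_Ifin chU])
  have "(\<lambda>j. \<Sum>i\<in>Ifin m. v i * ch i j) = v"
  proof
    fix j
    have "(\<Sum>i\<in>Ifin m. v i * ch i j) = (\<Sum>i\<in>Ifin m. v i * delta i j)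
        - (\<Sum>i\<in>Ifin m. v i * sg (card (snd i - ocan m (fst i))) * delta (fst i, ocan m (fst i)) j)"
      unfolding ch_def by (simp add: right_diff_distrib sum_subtractf mult.assoc)
    also have "(\<Sum>i\<in>Ifin m. v i * delta i j) = v j" using fun_cong[OF U_expand[of m v, OF v], where x=j] by simp
    also have "(\<Sum>i\<in>Ifin m. v i * sg (card (snd i - ocan m (fst i))) * delta (fst i, ocan m (fst i)) j)
        = (\<Sum>q\<in>{p. is_pairing m p}. \<Sum>S\<in>{S. orient m q S}. v (q, S) * sg (card (S - ocan m q)) * delta (q, ocan m q) j)"
      by (simp only: sum_Ifin fst_conv snd_conv)
    also have "\<dots> = (\<Sum>q\<in>{p. is_pairing m p}. phi m v q * delta (q, ocan m q) j)"
      by (rule sum.cong[OF refl]) (simp add: phi_def sum_distrib_right sum_distrib_left mult_ac)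
    also have "\<dots> = 0" using ph by simp
    finally show "(\<Sum>i\<in>Ifin m. v i * ch i j) = v j" by simp
  qed
  then show ?thesis using R by simp
qed


definition Am :: "nat \<Rightarrow> nat \<Rightarrow> (nat \<Rightarrow> nat) \<Rightarrow> (nat \<Rightarrow> nat) \<Rightarrow> real" where
  "Am n m q p = wt n m q p * sg (card (ocan m q - cd m q p)) * sg (card (({..<m} - cd m q p) - ocan m p))"

lemma orient_diff_sym: assumes q: "is_pairing m q" and A: "orient m q A" and B: "orient m q B"
  shows "card (A - B) = card (B - A)"
  using orient_cross[OF q A B A] by (simp add: Int_absorb Diff_idemp)

lemma inner_Bc: assumes q: "is_pairing m q" and S: "orient m q S" and p: "is_pairing m p"
  shows "(\<Sum>T\<in>{T. orient m p T}. sg (card (T - ocan m p)) * Bc n m (q, S) (p, T))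
       = Am n m q p * sg (card (S - ocan m q))"
proof -
  let ?C = "cd m q p"
  have C2: "orient m p ({..<m} - ?C)" by (rule cd_orient2[OF q p])
  have "(\<Sum>T\<in>{T. orient m p T}. sg (card (T - ocan m p)) * Bc n m (q, S) (p, T))
      = (\<Sum>T\<in>{T. orient m p T}. if T = {..<m} - ?C then sg (card (T - ocan m p)) * (wt n m q p * sg (card (S - ?C))) else 0)"
    by (rule sum.cong) (auto simp: Bc_def p)
  also have "\<dots> = sg (card (({..<m} - ?C) - ocan m p)) * (wt n m q p * sg (card (S - ?C)))"
    using C2 finite_Ors by (simp add: sum.delta)
  also have "sg (card (S - ?C)) = sg (card (S - ocan m q)) * sg (card (ocan m q - ?C))"
  proof -
    have o: "orient m q (ocan m q)" by (rule ocan_orient[OF q])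
    have "sg (card (ocan m q - S)) * sg (card (ocan m q - ?C)) = sg (card (S - ?C))"
      by (rule orient_parity[OF q o S cd_orient[OF q p]])
    moreover have "card (ocan m q - S) = card (S - ocan m q)" by (rule orient_diff_sym[OF q o S])
    ultimately show ?thesis by simp
  qed
  finally show ?thesis unfolding Am_def by (simp add: mult_ac)
qed

lemma phi_bt: assumes p: "is_pairing m p"
  shows "phi m (bt n m v) p = (\<Sum>q\<in>{q. is_pairing m q}. Am n m q p * phi m v q)"
proof -
  have "phi m (bt n m v) p = (\<Sum>T\<in>{T. orient m p T}. \<Sum>i\<in>Ifin m. sg (card (T - ocan m p)) * (v i * Bc n m i (p, T)))"
    unfolding phi_def bt_def by (simp add: sum_distrib_left)
  also have "\<dots> = (\<Sum>i\<in>Ifin m. v i * (\<Sum>T\<in>{T. orient m p T}. sg (card (T - ocan m p)) * Bc n m i (p, T)))"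
    by (subst sum.swap) (simp add: sum_distrib_left mult_ac)
  also have "\<dots> = (\<Sum>q\<in>{q. is_pairing m q}. \<Sum>S\<in>{S. orient m q S}. v (q, S) * (\<Sum>T\<in>{T. orient m p T}. sg (card (T - ocan m p)) * Bc n m (q, S) (p, T)))"
    by (rule sum_Ifin)
  also have "\<dots> = (\<Sum>q\<in>{q. is_pairing m q}. \<Sum>S\<in>{S. orient m q S}. v (q, S) * (Am n m q p * sg (card (S - ocan m q))))"
    by (rule sum.cong[OF refl], rule sum.cong[OF refl]) (simp add: inner_Bc p)
  also have "\<dots> = (\<Sum>q\<in>{q. is_pairing m q}. Am n m q p * phi m v q)"
    unfolding phi_def by (rule sum.cong[OF refl]) (simp add: sum_distrib_left mult_ac)
  finally show ?thesis .
qed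

lemma abs_Am: "\<bar>Am n m q p\<bar> = wt n m q p"
  unfolding Am_def wt_def by (simp add: abs_mult sg_abs)

lemma wt_nonneg: "0 \<le> wt n m q p" unfolding wt_def by simp

lemma wt_gap: assumes q: "is_pairing m q" and p: "is_pairing m p" and ne: "q \<noteq> p" and n: "1 \<le> n"
  shows "wt n m q p * (2 * real n) \<le> wt n m p p"
proof -
  have lt: "num_circles m q p + 1 \<le> num_circles m p p" using circ_lt[OF q p ne] by simp
  have "wt n m q p * (2 * real n) = (2 * real n) ^ (num_circles m q p + 1)" unfolding wt_def by simp
  also have "\<dots> \<le> (2 * real n) ^ num_circles m p p"
    by (rule power_increasing[OF lt]) (use n in simp)
  finally show ?thesis unfolding wt_def .
qed

lemma dominance:
  assumes n: "card {p. is_pairing m p} < 2 * n"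
    and h: "\<And>p. is_pairing m p \<Longrightarrow> (\<Sum>q\<in>{q. is_pairing m q}. Am n m q p * w q) = 0"
  shows "is_pairing m q0 \<Longrightarrow> w q0 = 0"
proof (rule ccontr)
  let ?P = "{q. is_pairing m q}"
  let ?K = "card ?P"
  assume q0: "is_pairing m q0" and nz: "w q0 \<noteq> 0"
  have fP: "finite ?P" by (rule finite_Prs)
  have n1: "1 \<le> n" using n by simp
  define M where "M = Max ((\<lambda>q. \<bar>w q\<bar>) ` ?P)"
  have "M \<in> (\<lambda>q. \<bar>w q\<bar>) ` ?P" unfolding M_def by (rule Max_in) (use fP q0 in auto)
  then obtain p where p: "is_pairing m p" "\<bar>w p\<bar> = M" by auto
  have Mge: "\<bar>w q\<bar> \<le> M" if "is_pairing m q" for q unfolding M_def by (rule Max_ge) (use fP that in auto)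
  have Mpos: "0 < M" using Mge[OF q0] nz by simp
  have wpp: "0 < wt n m p p" unfolding wt_def using n1 by simp
  have pP: "p \<in> ?P" using p by simp
  have split: "(\<Sum>q\<in>?P. Am n m q p * w q) = Am n m p p * w p + (\<Sum>q\<in>?P - {p}. Am n m q p * w q)"
    by (rule sum.remove[OF fP pP])
  have eq: "wt n m p p * M = \<bar>\<Sum>q\<in>?P - {p}. Am n m q p * w q\<bar>"
  proof -
    have "Am n m p p * w p = - (\<Sum>q\<in>?P - {p}. Am n m q p * w q)" using split h[OF p(1)] by simp
    then have "\<bar>Am n m p p * w p\<bar> = \<bar>\<Sum>q\<in>?P - {p}. Am n m q p * w q\<bar>" by simp
    then show ?thesis using p(2) abs_Am by (simp add: abs_mult)
  qed
  have "\<bar>\<Sum>q\<in>?P - {p}. Am n m q p * w q\<bar> \<le> (\<Sum>q\<in>?P - {p}. wt n m q p * \<bar>w q\<bar>)"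
  proof -
    have "\<bar>\<Sum>q\<in>?P - {p}. Am n m q p * w q\<bar> \<le> (\<Sum>q\<in>?P - {p}. \<bar>Am n m q p * w q\<bar>)" by (rule sum_abs)
    also have "\<dots> = (\<Sum>q\<in>?P - {p}. wt n m q p * \<bar>w q\<bar>)" by (simp add: abs_mult abs_Am)
    finally show ?thesis .
  qed
  moreover have "(\<Sum>q\<in>?P - {p}. wt n m q p * \<bar>w q\<bar>) * (2 * real n) \<le> real (?K - 1) * (wt n m p p * M)"
  proof -
    have "(\<Sum>q\<in>?P - {p}. wt n m q p * \<bar>w q\<bar>) * (2 * real n) = (\<Sum>q\<in>?P - {p}. (wt n m q p * (2 * real n)) * \<bar>w q\<bar>)"
      by (simp add: sum_distrib_right sum_distrib_left mult_ac)
    also have "\<dots> \<le> (\<Sum>q\<in>?P - {p}. wt n m p p * M)"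
    proof (rule sum_mono)
      fix q assume q: "q \<in> ?P - {p}"
      have a: "wt n m q p * (2 * real n) \<le> wt n m p p" using wt_gap[OF _ p(1) _ n1] q by simp
      have b: "\<bar>w q\<bar> \<le> M" using Mge q by simp
      show "wt n m q p * (2 * real n) * \<bar>w q\<bar> \<le> wt n m p p * M"
        by (rule mult_mono[OF a b]) (use wpp in simp_all)
    qed
    also have "\<dots> = real (?K - 1) * (wt n m p p * M)" using pP fP by simp
    finally show ?thesis .
  qed
  ultimately have A: "(2 * real n) * (wt n m p p * M) \<le> real (?K - 1) * (wt n m p p * M)"
    using eq by (smt (verit) mult_right_mono of_nat_0_le_iff mult.commute)
  have "0 < wt n m p p * M" using wpp Mpos by simp
  from mult_right_le_imp_le[OF A this] have "2 * real n \<le> real (?K - 1)" .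
  then show False using n by linarith
qed

lemma inj_UF: assumes n: "card {p. is_pairing m p} < 2 * n"
  and v: "\<And>j. j \<notin> Ifin m \<Longrightarrow> v j = 0" and bv: "bt n m v \<in> UF m"
  shows "v \<in> UF m"
proof (rule phi0_UF[OF v])
  fix q assume q: "is_pairing m q"
  have "\<And>p. is_pairing m p \<Longrightarrow> (\<Sum>q\<in>{q. is_pairing m q}. Am n m q p * phi m v q) = 0"
    using phi_bt phi_UF[OF bv] by metis
  then show "phi m v q = 0" by (rule dominance[OF n _ q])
qed


lemma fsum_apply: "(\<Sum>a\<in>A. f a) x = (\<Sum>a\<in>A. f a x)"
proof (cases "finite A")
  case True then show ?thesis by (induction A rule: finite_induct) simp_all
next
  case False then show ?thesis by simp
qed

lemma pow_lin:
  fixes T :: "('i \<Rightarrow> real) \<Rightarrow> ('i \<Rightarrow> real)"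
  assumes lin: "\<And>(A::'i set) a F. finite A \<Longrightarrow> T (\<lambda>x. \<Sum>r\<in>A. a r * F r x) = (\<lambda>x. \<Sum>r\<in>A. a r * T (F r) x)"
  shows "finite (A::'i set) \<Longrightarrow> (T ^^ j) (\<lambda>x. \<Sum>r\<in>A. a r * F r x) = (\<lambda>x. \<Sum>r\<in>A. a r * (T ^^ j) (F r) x)"
proof (induction j)
  case 0 then show ?case by simp
next
  case (Suc j)
  then have "(T ^^ Suc j) (\<lambda>x. \<Sum>r\<in>A. a r * F r x) = T (\<lambda>x. \<Sum>r\<in>A. a r * (T ^^ j) (F r) x)" by simp
  also have "\<dots> = (\<lambda>x. \<Sum>r\<in>A. a r * T ((T ^^ j) (F r)) x)" by (rule lin[OF Suc.prems])
  finally show ?case by simp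
qed

lemma supp_expand: assumes X: "finite X" and v: "\<And>j. j \<notin> X \<Longrightarrow> v j = 0"
  shows "v = (\<lambda>x. \<Sum>i\<in>X. v i * delta i x)"
proof
  fix x
  show "v x = (\<Sum>i\<in>X. v i * delta i x)"
  proof (cases "x \<in> X")
    case True
    have "(\<Sum>i\<in>X. v i * delta i x) = (\<Sum>i\<in>X. if i = x then v i else 0)"
      by (rule sum.cong) (auto simp: delta_def)
    then show ?thesis using True X by (simp add: sum.delta)
  next
    case False
    have "(\<Sum>i\<in>X. v i * delta i x) = 0"
      by (rule sum.neutral) (use False in \<open>auto simp: delta_def\<close>)
    then show ?thesis using False v by simp
  qed
qed

lemma poly_annih:
  fixes T :: "('i \<Rightarrow> real) \<Rightarrow> ('i \<Rightarrow> real)" and X :: "'i set"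
  assumes X: "finite X"
    and lin: "\<And>(A::'i set) a F. finite A \<Longrightarrow> T (\<lambda>x. \<Sum>r\<in>A. a r * F r x) = (\<lambda>x. \<Sum>r\<in>A. a r * T (F r) x)"
    and supp: "\<And>v j. j \<notin> X \<Longrightarrow> T v j = 0"
  shows "\<exists>c d. (\<exists>j\<le>d. c j \<noteq> 0) \<and> (\<forall>v. (\<forall>j. j \<notin> X \<longrightarrow> v j = 0) \<longrightarrow> (\<lambda>x. \<Sum>j\<le>d. c j * (T ^^ j) v x) = (\<lambda>x. 0))"
proof -
  interpret fvs: vector_space "\<lambda>(c::real) (f::'i \<times> 'i \<Rightarrow> real). (\<lambda>x. c * f x)"
    by unfold_locales (simp_all add: fun_eq_iff algebra_simps)
  define M where "M j = (\<lambda>(i, i'). if i \<in> X then (T ^^ j) (delta i) i' else 0)" for j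
  define D where "D = (\<lambda>p. delta p) ` (X \<times> X)"
  define K where "K = card (X \<times> X)"
  have fD: "finite D" unfolding D_def using X by simp
  have cD: "card D \<le> K" unfolding D_def K_def by (rule card_image_le) (use X in simp)
  have Msupp: "M j p = 0" if "p \<notin> X \<times> X" for j p
  proof -
    obtain i i' where p: "p = (i, i')" by (cases p)
    show ?thesis
    proof (cases "i \<in> X")
      case False then show ?thesis unfolding M_def p by simp
    next
      case True
      then have i': "i' \<notin> X" using that p by simp
      show ?thesis
      proof (cases j)
        case 0 then show ?thesis unfolding M_def p using True i' by (auto simp: delta_def)
      next
        case (Suc j') then show ?thesis unfolding M_def p using True i' supp by simp
      qed
    qed
  qed
  have Mspan: "M j \<in> fvs.span D" for j
  proof -
    have "M j = (\<Sum>p\<in>X \<times> X. (\<lambda>x. M j p * delta p x))"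
    proof
      fix x
      have "(\<Sum>p\<in>X \<times> X. (\<lambda>x. M j p * delta p x)) x = (\<Sum>p\<in>X \<times> X. M j p * delta p x)"
        by (rule fsum_apply)
      also have "\<dots> = M j x" using fun_cong[OF supp_expand[of "X \<times> X" "M j", OF _ Msupp], where x=x] X by simp
      finally show "M j x = (\<Sum>p\<in>X \<times> X. (\<lambda>x. M j p * delta p x)) x" by simp
    qed
    moreover have "(\<Sum>p\<in>X \<times> X. (\<lambda>x. M j p * delta p x)) \<in> fvs.span D"
      by (rule fvs.span_sum, rule fvs.span_scale, rule fvs.span_base) (auto simp: D_def)
    ultimately show ?thesis by simp
  qed
  have "\<exists>c. (\<exists>j\<le>K. c j \<noteq> 0) \<and> (\<forall>p. (\<Sum>j\<le>K. c j * M j p) = 0)"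
  proof (cases "inj_on M {..K}")
    case False
    then obtain a b where ab: "a \<le> K" "b \<le> K" "a \<noteq> b" "M a = M b" unfolding inj_on_def by auto
    define c where "c j = (if j = a then 1 else if j = b then -1 else (0::real))" for j
    have "(\<Sum>j\<le>K. c j * M j p) = 0" for p
    proof -
      have "(\<Sum>j\<le>K. c j * M j p) = (\<Sum>j\<in>{a, b}. c j * M j p)"
        by (rule sum.mono_neutral_right) (use ab in \<open>auto simp: c_def\<close>)
      also have "\<dots> = 0" using ab by (simp add: c_def)
      finally show ?thesis .
    qed
    moreover have "c a \<noteq> 0" unfolding c_def by simp
    ultimately show ?thesis using ab(1) by blast
  next
    case True
    have cM: "card (M ` {..K}) = K + 1" using card_image[OF True] by simp
    have "\<not> fvs.independent (M ` {..K})"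
    proof
      assume "fvs.independent (M ` {..K})"
      then have "card (M ` {..K}) \<le> card D"
        using fvs.independent_span_bound[OF fD] Mspan by blast
      then show False using cM cD by simp
    qed
    then obtain t u where tu: "finite t" "t \<subseteq> M ` {..K}" "(\<Sum>v\<in>t. (\<lambda>x. u v * v x)) = 0" "\<exists>v\<in>t. u v \<noteq> 0"
      unfolding fvs.dependent_explicit by blast
    define J where "J = {j. j \<le> K \<and> M j \<in> t}"
    have tJ: "t = M ` J" unfolding J_def using tu(2) by auto
    have injJ: "inj_on M J" using True unfolding J_def by (rule inj_on_subset) auto
    define c where "c j = (if j \<in> J then u (M j) else 0)" for j
    have "(\<Sum>j\<le>K. c j * M j p) = 0" for p
    proof -
      have "(\<Sum>j\<le>K. c j * M j p) = (\<Sum>j\<in>J. u (M j) * M j p)"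
        by (rule sum.mono_neutral_cong_right) (auto simp: J_def c_def)
      also have "\<dots> = (\<Sum>v\<in>t. u v * v p)" unfolding tJ by (rule sym, rule sum.reindex_cong[OF injJ refl]) simp
      also have "\<dots> = (\<Sum>v\<in>t. (\<lambda>x. u v * v x)) p" by (rule fsum_apply[symmetric])
      also have "\<dots> = 0" using tu(3) by simp
      finally show ?thesis .
    qed
    moreover obtain w where "w \<in> t" "u w \<noteq> 0" using tu(4) by blast
    then obtain j where "j \<in> J" "w = M j" using tJ by blast
    then have "j \<le> K" "c j \<noteq> 0" using \<open>u w \<noteq> 0\<close> unfolding c_def J_def by auto
    ultimately show ?thesis by blast
  qed
  then obtain c where c: "\<exists>j\<le>K. c j \<noteq> 0" "\<And>p. (\<Sum>j\<le>K. c j * M j p) = 0" by blast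
  have "(\<lambda>x. \<Sum>j\<le>K. c j * (T ^^ j) v x) = (\<lambda>x. 0)" if v: "\<forall>j. j \<notin> X \<longrightarrow> v j = 0" for v
  proof
    fix x
    have ve: "v = (\<lambda>x. \<Sum>i\<in>X. v i * delta i x)" by (rule supp_expand[OF X]) (use v in blast)
    have "(\<Sum>j\<le>K. c j * (T ^^ j) v x) = (\<Sum>j\<le>K. c j * (\<Sum>i\<in>X. v i * (T ^^ j) (delta i) x))"
      by (subst ve) (simp add: pow_lin[OF lin X])
    also have "\<dots> = (\<Sum>i\<in>X. v i * (\<Sum>j\<le>K. c j * M j (i, x)))"
      unfolding M_def by (simp add: sum_distrib_left sum.swap[of _ "{..K}" X] mult_ac)
    also have "\<dots> = 0" using c(2) by simp
    finally show "(\<Sum>j\<le>K. c j * (T ^^ j) v x) = 0" .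
  qed
  then show ?thesis using c(1) by blast
qed


lemma rel_in: "x \<in> og_relations Op act k m \<Longrightarrow> x \<in> og_rel Op act k m"
  unfolding og_rel_def by (rule fspan_gen)

lemma valid_regluing: assumes g: "valid_ograph Op k m g" and p: "is_pairing m p"
  shows "valid_ograph Op k m (regluing m g p)"
proof -
  have q: "is_pairing m (gpair g)" using g unfolding valid_ograph_def by blast
  have e: "regluing m g p = mkg g (p, {..<m} - cd m (gpair g) p)"
    using regluing_mkg[of m g "gpair g" "gst g" p] mkg_self[of g] by (simp add: mkg_mkg)
  have "(p, {..<m} - cd m (gpair g) p) \<in> Ifin m" using cd_orient2[OF q p] p Ifin_iff by simp
  then show ?thesis unfolding e by (rule valid_mkg[OF g])
qed

lemma rel1: "valid_ograph Op k m g \<Longrightarrow> x < m \<Longrightarrow>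
  (\<lambda>s. delta g s + delta (flip_edge g x) s) \<in> og_relations Op act k m"
  unfolding og_relations_def
  apply (rule UnI1, rule UnI1, rule UnI1, rule CollectI)
  apply (rule exI)+
  apply (rule conjI[OF refl])
  by simp

lemma rel2: "valid_ograph Op k m g \<Longrightarrow> t permutes {..<m} \<Longrightarrow> r permutes {..<k} \<Longrightarrow>
  (\<lambda>s. delta g s - real_of_int (sign r) * delta (transport k m t r g) s) \<in> og_relations Op act k m"
  unfolding og_relations_def
  apply (rule UnI1, rule UnI1, rule UnI2, rule CollectI)
  apply (rule exI)+
  apply (rule conjI[OF refl])
  by simp

lemma rel3: "valid_ograph Op k m g \<Longrightarrow> v < k \<Longrightarrow> p permutes {..<valence m g v} \<Longrightarrow>
  (\<lambda>s. delta g s - delta (relabel_spider act m g v p) s) \<in> og_relations Op act k m"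
  unfolding og_relations_def
  apply (rule UnI1, rule UnI2, rule CollectI)
  apply (rule exI)+
  apply (rule conjI[OF refl])
  by simp

lemma rel4: "valid_ograph Op k m g \<Longrightarrow> v < k \<Longrightarrow> a \<in> Op (valence m g v - 1) \<Longrightarrow> b \<in> Op (valence m g v - 1) \<Longrightarrow>
  (\<lambda>s. delta (set_color g v (c *\<^sub>R a + d *\<^sub>R b)) s - c * delta (set_color g v a) s
           - d * delta (set_color g v b) s) \<in> og_relations Op act k m"
  unfolding og_relations_def
  apply (rule UnI2, rule CollectI)
  apply (rule exI)+
  apply (rule conjI[OF refl])
  by simp

lemma M_gen_Phi:
  assumes "gpair h = gpair g" "gst h = gst g" "\<And>p. regluing m h p = Phi (regluing m g p)"
  shows "M_gen n m h = (\<lambda>s. \<Sum>p\<in>{p. is_pairing m p}. (2 * real n) ^ num_circles m (gpair g) p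
            * regluing_sign m g p * delta (Phi (regluing m g p)) s)"
proof -
  have "regluing_sign m h p = regluing_sign m g p" for p
    unfolding regluing_sign_def coherent_dirs_cd using assms by simp
  then show ?thesis unfolding M_gen_def using assms by simp
qed

lemma M_gen_self: "M_gen n m g = (\<lambda>s. \<Sum>p\<in>{p. is_pairing m p}. (2 * real n) ^ num_circles m (gpair g) p
            * regluing_sign m g p * delta (regluing m g p) s)"
  unfolding M_gen_def ..

lemma valence_eq: "gvtx h = gvtx g \<Longrightarrow> valence m h v = valence m g v"
  unfolding valence_def by simp

lemma relabel_regluing: "regluing m (relabel_spider act m g v p) p' = relabel_spider act m (regluing m g p') v p"
proof -
  show ?thesis unfolding regluing_def relabel_spider_def coherent_dirs_cd ograph.sel valence_def ..
qed

lemma set_color_regluing: "regluing m (set_color g v a) p' = set_color (regluing m g p') v a"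
  unfolding regluing_def set_color_def coherent_dirs_cd by simp

lemma Mop_relabel:
  assumes g: "valid_ograph Op k m g" and v: "v < k" and p: "p permutes {..<valence m g v}"
  shows "M_op n m (\<lambda>s. delta g s - delta (relabel_spider act m g v p) s) \<in> og_rel Op act k m"
proof -
  let ?h = "relabel_spider act m g v p"
  have e: "M_op n m (\<lambda>s. delta g s - delta ?h s) = (\<lambda>s. M_gen n m g s - M_gen n m ?h s)"
    unfolding M_op_Kop by (simp add: Kop_diff fsupp_delta Kop_delta)
  have Mh: "M_gen n m ?h = (\<lambda>s. \<Sum>p'\<in>{p. is_pairing m p}. (2 * real n) ^ num_circles m (gpair g) p'
            * regluing_sign m g p' * delta (relabel_spider act m (regluing m g p') v p) s)"
    by (rule M_gen_Phi[OF _ _ relabel_regluing]) (simp_all add: relabel_spider_def)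
  have "(\<lambda>s. M_gen n m g s - M_gen n m ?h s) = (\<lambda>s. \<Sum>p'\<in>{p. is_pairing m p}. ((2 * real n) ^ num_circles m (gpair g) p'
            * regluing_sign m g p') * (delta (regluing m g p') s - delta (relabel_spider act m (regluing m g p') v p) s))"
    unfolding Mh M_gen_self[of n m g] by (simp add: right_diff_distrib sum_subtractf mult_ac)
  also have "\<dots> \<in> og_rel Op act k m"
  proof (rule lcc_sum[OF og_rel_lcc finite_Prs])
    fix p' assume "p' \<in> {p. is_pairing m p}"
    then have vr: "valid_ograph Op k m (regluing m g p')" using valid_regluing[OF g] by simp
    have "valence m (regluing m g p') v = valence m g v" by (rule valence_eq) (simp add: regluing_def)
    then have "p permutes {..<valence m (regluing m g p') v}" using p by simp
    then show "(\<lambda>s. delta (regluing m g p') s - delta (relabel_spider act m (regluing m g p') v p) s) \<in> og_rel Op act k m"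
      using vr v by (intro rel_in rel3)
  qed
  finally show ?thesis unfolding e .
qed

lemma Mop_setcolor:
  assumes g: "valid_ograph Op k m g" and v: "v < k"
    and a: "a \<in> Op (valence m g v - 1)" and b: "b \<in> Op (valence m g v - 1)"
  shows "M_op n m (\<lambda>s. delta (set_color g v (c *\<^sub>R a + d *\<^sub>R b)) s - c * delta (set_color g v a) s
           - d * delta (set_color g v b) s) \<in> og_rel Op act k m"
proof -
  let ?x = "set_color g v (c *\<^sub>R a + d *\<^sub>R b)" and ?y = "set_color g v a" and ?z = "set_color g v b"
  have e: "M_op n m (\<lambda>s. delta ?x s - c * delta ?y s - d * delta ?z s) = (\<lambda>s. M_gen n m ?x s - c * M_gen n m ?y s - d * M_gen n m ?z s)"
    unfolding M_op_Kop
    by (simp add: Kop_diff Kop_scale fsupp_delta fsupp_scale fsupp_diff Kop_delta)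
  have MM: "M_gen n m (set_color g v w) = (\<lambda>s. \<Sum>p'\<in>{p. is_pairing m p}. (2 * real n) ^ num_circles m (gpair g) p'
            * regluing_sign m g p' * delta (set_color (regluing m g p') v w) s)" for w
    by (rule M_gen_Phi[OF _ _ set_color_regluing]) (simp_all add: set_color_def)
  have "(\<lambda>s. M_gen n m ?x s - c * M_gen n m ?y s - d * M_gen n m ?z s) = (\<lambda>s. \<Sum>p'\<in>{p. is_pairing m p}. ((2 * real n) ^ num_circles m (gpair g) p'
            * regluing_sign m g p') * (delta (set_color (regluing m g p') v (c *\<^sub>R a + d *\<^sub>R b)) s
               - c * delta (set_color (regluing m g p') v a) s - d * delta (set_color (regluing m g p') v b) s))"
    unfolding MM by (simp add: right_diff_distrib sum_subtractf sum_distrib_left mult_ac)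
  also have "\<dots> \<in> og_rel Op act k m"
  proof (rule lcc_sum[OF og_rel_lcc finite_Prs])
    fix p' assume "p' \<in> {p. is_pairing m p}"
    then have vr: "valid_ograph Op k m (regluing m g p')" using valid_regluing[OF g] by simp
    have "valence m (regluing m g p') v = valence m g v" by (rule valence_eq) (simp add: regluing_def)
    then have "a \<in> Op (valence m (regluing m g p') v - 1)" "b \<in> Op (valence m (regluing m g p') v - 1)"
      using a b by simp_all
    then show "(\<lambda>s. delta (set_color (regluing m g p') v (c *\<^sub>R a + d *\<^sub>R b)) s
               - c * delta (set_color (regluing m g p') v a) s - d * delta (set_color (regluing m g p') v b) s) \<in> og_rel Op act k m"
      using vr v by (intro rel_in rel4)
  qed
  finally show ?thesis unfolding e .
qed

lemma Mop_flip:
  assumes g: "valid_ograph Op k m g" and x: "x < m"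
  shows "M_op n m (\<lambda>s. delta g s + delta (flip_edge g x) s) \<in> og_rel Op act k m"
proof -
  obtain q S where qS: "q = gpair g" "S = gst g" by blast
  have i: "(q, S) \<in> Ifin m" using valid_Ifin[OF g] qS by simp
  have q: "is_pairing m q" and S: "orient m q S" using i Ifin_iff by auto
  have g': "g = mkg g (q, S)" using mkg_self[of g] qS by simp
  have f': "flip_edge g x = mkg g (q, flipS q S x)" by (subst g', rule flip_edge_mkg)
  have e: "M_op n m (\<lambda>s. delta g s + delta (flip_edge g x) s) = (\<lambda>s. M_gen n m g s + M_gen n m (flip_edge g x) s)"
    unfolding M_op_Kop by (simp add: Kop_add fsupp_delta Kop_delta)
  have "M_gen n m (flip_edge g x) = (\<lambda>s. - M_gen n m g s)"
  proof
    fix s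
    have "M_gen n m (flip_edge g x) s = (\<Sum>p\<in>{p. is_pairing m p}. wt n m q p * sg (card (flipS q S x - cd m q p)) * delta (mkg g (p, {..<m} - cd m q p)) s)"
      unfolding f' M_gen_mkg ..
    also have "\<dots> = (\<Sum>p\<in>{p. is_pairing m p}. - (wt n m q p * sg (card (S - cd m q p)) * delta (mkg g (p, {..<m} - cd m q p)) s))"
      by (rule sum.cong[OF refl]) (simp add: flipS_sign[OF q S cd_orient[OF q] x])
    also have "\<dots> = - M_gen n m g s"
      by (subst (2) g', simp only: M_gen_mkg sum_negf)
    finally show "M_gen n m (flip_edge g x) s = - M_gen n m g s" .
  qed
  then have "M_op n m (\<lambda>s. delta g s + delta (flip_edge g x) s) = (\<lambda>s. 0)" unfolding e by simp
  then show ?thesis using lcc_zero[OF og_rel_lcc] by simp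
qed


lemma chainW: assumes g: "valid_ograph Op k m g" and p: "is_pairing m p" and T: "orient m p T"
  shows "(\<lambda>s. delta (mkg g (p, T)) s - sg (card (T - ocan m p)) * delta (mkg g (p, ocan m p)) s) \<in> og_rel Op act k m"
proof -
  have u: "(\<lambda>j. delta (p, T) j - sg (card (T - ocan m p)) * delta (p, ocan m p) j) \<in> UF m"
    by (rule chain_UF[OF p T refl])
  have i1: "(p, T) \<in> Ifin m" using p T Ifin_iff by simp
  have i2: "(p, ocan m p) \<in> Ifin m" using p ocan_orient[OF p] Ifin_iff by simp
  have "lift m g (\<lambda>j. delta (p, T) j - sg (card (T - ocan m p)) * delta (p, ocan m p) j)
     = (\<lambda>s. delta (mkg g (p, T)) s - sg (card (T - ocan m p)) * delta (mkg g (p, ocan m p)) s)"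
    unfolding lift_diff lift_scale lift_delta[OF i1] lift_delta[OF i2] ..
  then show ?thesis using lift_UF[OF g u] by simp
qed

lemma transport_mkg: "transport k m t r (mkg g (p, X)) = mkg (transport k m t r g) (cnj t p, t ` X)"
  unfolding transport_def mkg_def cnj_def ograph.sel fst_conv snd_conv ..

lemma gpair_transport: "gpair (transport k m t r g) = cnj t (gpair g)"
  unfolding transport_def cnj_def by simp
lemma gst_transport: "gst (transport k m t r g) = t ` gst g"
  unfolding transport_def by simp

lemma orient_cnj_back: assumes t: "t permutes {..<m}" and Z: "orient m (cnj t q) Z"
  shows "orient m q (inv t ` Z)"
  unfolding orient_def
proof (intro conjI allI impI)
  have it: "inv t permutes {..<m}" by (rule permutes_inv[OF t])
  show "inv t ` Z \<subseteq> {..<m}" using orient_sub[OF Z] permutes_in_image[OF it] by auto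
next
  fix x assume x: "x < m"
  have tx: "t x < m" using permutes_in_image[OF t] x by simp
  have mem: "y \<in> inv t ` Z \<longleftrightarrow> t y \<in> Z" for y
  proof
    assume "y \<in> inv t ` Z" then obtain z where "z \<in> Z" "y = inv t z" by blast
    then show "t y \<in> Z" using permutes_inverses(1)[OF t] by simp
  next
    assume "t y \<in> Z" then have "inv t (t y) \<in> inv t ` Z" by blast
    then show "y \<in> inv t ` Z" using permutes_inverses(2)[OF t] by simp
  qed
  have "cnj t q (t x) = t (q x)" by (rule cnj_app[OF t])
  moreover have "t x \<in> Z \<longleftrightarrow> cnj t q (t x) \<notin> Z" using Z tx unfolding orient_def by blast
  ultimately show "x \<in> inv t ` Z \<longleftrightarrow> q x \<notin> inv t ` Z" using mem by simp
qed

lemma sg_key: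
  assumes q: "is_pairing m q" and p: "is_pairing m p" and S: "orient m q S"
    and C: "orient m q C" and C2: "orient m p ({..<m} - C)"
    and Y: "orient m q Y" and Y2: "orient m p ({..<m} - Y)"
  shows "sg (card (S - C)) * sg (card (({..<m} - C) - ocan m p)) = sg (card (S - Y)) * sg (card (({..<m} - Y) - ocan m p))"
proof -
  have o: "orient m p (ocan m p)" by (rule ocan_orient[OF p])
  have P1: "sg (card (S - C)) * sg (card (S - Y)) = sg (card (C - Y))" by (rule orient_parity[OF q S C Y])
  have P2: "sg (card (ocan m p - ({..<m} - C))) * sg (card (ocan m p - ({..<m} - Y))) = sg (card (({..<m} - C) - ({..<m} - Y)))"
    by (rule orient_parity[OF p o C2 Y2])
  have d1: "card (ocan m p - ({..<m} - C)) = card (({..<m} - C) - ocan m p)" by (rule orient_diff_sym[OF p o C2])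
  have d2: "card (ocan m p - ({..<m} - Y)) = card (({..<m} - Y) - ocan m p)" by (rule orient_diff_sym[OF p o Y2])
  have "({..<m} - C) - ({..<m} - Y) = Y - C" using orient_sub[OF Y] by blast
  then have d3: "card (({..<m} - C) - ({..<m} - Y)) = card (C - Y)" using orient_diff_sym[OF q Y C] by simp
  define a where "a = sg (card (S - C))"
  define b where "b = sg (card (S - Y))"
  define c where "c = sg (card (({..<m} - C) - ocan m p))"
  define d where "d = sg (card (({..<m} - Y) - ocan m p))"
  have ab: "a * b = c * d" using P1 P2 d1 d2 d3 unfolding a_def b_def c_def d_def by simp
  have bb: "b * b = 1" unfolding b_def by (rule sg_sq)
  have cc: "c * c = 1" unfolding c_def by (rule sg_sq)
  have "a * c = a * c * (b * b)" using bb by simp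
  also have "\<dots> = (a * b) * c * b" by (simp add: mult_ac)
  also have "\<dots> = c * c * d * b" using ab by (simp add: mult_ac)
  also have "\<dots> = b * d" using cc by (simp add: mult_ac)
  finally show ?thesis unfolding a_def b_def c_def d_def .
qed

lemma cnj_bij: assumes t: "t permutes {..<m}"
  shows "bij_betw (cnj t) {p. is_pairing m p} {p. is_pairing m p}"
proof (rule bij_betw_byWitness[where f' = "cnj (inv t)"])
  have it: "inv t permutes {..<m}" by (rule permutes_inv[OF t])
  have ii: "inv (inv t) = t" by (rule permutes_inv_inv[OF t])
  have o1: "inv t \<circ> t = id" "t \<circ> inv t = id" using permutes_inv_o[OF t] by auto
  show "\<forall>a\<in>{p. is_pairing m p}. cnj (inv t) (cnj t a) = a"
    unfolding cnj_def ii by (simp add: o_assoc[symmetric] o1) (simp add: o_assoc o1)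
  show "\<forall>a\<in>{p. is_pairing m p}. cnj t (cnj (inv t) a) = a"
    unfolding cnj_def ii by (simp add: o_assoc[symmetric] o1) (simp add: o_assoc o1)
  show "cnj t ` {p. is_pairing m p} \<subseteq> {p. is_pairing m p}" using cnj_pairing[OF t] by blast
  show "cnj (inv t) ` {p. is_pairing m p} \<subseteq> {p. is_pairing m p}" using cnj_pairing[OF it] by blast
qed

lemma Mop_transport:
  assumes g: "valid_ograph Op k m g" and t: "t permutes {..<m}" and r: "r permutes {..<k}"
  shows "M_op n m (\<lambda>s. delta g s - real_of_int (sign r) * delta (transport k m t r g) s) \<in> og_rel Op act k m"
proof -
  let ?tg = "transport k m t r g"
  let ?P = "{p. is_pairing m p}"
  let ?sr = "real_of_int (sign r)"
  obtain q S where qS: "q = gpair g" "S = gst g" by blast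
  have i: "(q, S) \<in> Ifin m" using valid_Ifin[OF g] qS by simp
  have q: "is_pairing m q" and S: "orient m q S" using i Ifin_iff by auto
  have g': "g = mkg g (q, S)" using mkg_self[of g] qS by simp
  have tg': "?tg = mkg ?tg (cnj t q, t ` S)"
    using mkg_self[of ?tg] gpair_transport[of k m t r g] gst_transport[of k m t r g] qS by simp
  have tq: "is_pairing m (cnj t q)" by (rule cnj_pairing[OF t q])
  define C where "C p = cd m q p" for p
  define C' where "C' p = cd m (cnj t q) (cnj t p)" for p
  define Y where "Y p = inv t ` C' p" for p
  define X where "X p = {..<m} - Y p" for p
  have it: "inv t permutes {..<m}" by (rule permutes_inv[OF t])
  have Yo: "orient m q (Y p)" if p: "is_pairing m p" for p
    unfolding Y_def C'_def by (rule orient_cnj_back[OF t cd_orient[OF tq cnj_pairing[OF t p]]])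
  have imgdiff: "inv t ` ({..<m} - Z) = {..<m} - inv t ` Z" for Z
    using permutes_image[OF it] permutes_inj[OF it] by (simp add: image_set_diff)
  have Xo: "orient m p (X p)" if p: "is_pairing m p" for p
  proof -
    have "orient m (cnj t p) ({..<m} - C' p)" unfolding C'_def by (rule cd_orient2[OF tq cnj_pairing[OF t p]])
    then have "orient m p (inv t ` ({..<m} - C' p))" by (rule orient_cnj_back[OF t])
    then show ?thesis unfolding X_def Y_def imgdiff .
  qed
  have tX: "t ` X p = {..<m} - C' p" for p
  proof -
    have "t ` X p = t ` {..<m} - t ` inv t ` C' p" unfolding X_def Y_def
      using permutes_inj[OF t] by (simp add: image_set_diff)
    also have "t ` inv t ` C' p = C' p" using permutes_inverses(1)[OF t] by (simp add: image_image)
    finally show ?thesis using permutes_image[OF t] by simp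
  qed
  have cS: "card (t ` S - C' p) = card (S - Y p)" for p
  proof -
    have "t ` S - C' p = t ` (S - Y p)"
    proof -
      have "t ` (S - Y p) = t ` S - t ` Y p" using permutes_inj[OF t] by (simp add: image_set_diff)
      moreover have "t ` Y p = C' p" unfolding Y_def using permutes_inverses(1)[OF t] by (simp add: image_image)
      ultimately show ?thesis by simp
    qed
    then show ?thesis using card_image[OF inj_on_subset[OF permutes_inj[OF t]]] by simp
  qed
  have Mg: "M_gen n m g s = (\<Sum>p\<in>?P. wt n m q p * sg (card (S - C p)) * delta (mkg g (p, {..<m} - C p)) s)" for s
    unfolding C_def by (subst g', simp only: M_gen_mkg mkg_mkg)
  have Mtg: "M_gen n m ?tg s = (\<Sum>p\<in>?P. wt n m q p * sg (card (S - Y p)) * delta (transport k m t r (mkg g (p, X p))) s)" for s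
  proof -
    have "M_gen n m ?tg s = (\<Sum>p'\<in>?P. wt n m (cnj t q) p' * sg (card (t ` S - cd m (cnj t q) p')) * delta (mkg ?tg (p', {..<m} - cd m (cnj t q) p')) s)"
      by (subst tg', simp only: M_gen_mkg mkg_mkg)
    also have "\<dots> = (\<Sum>p\<in>?P. wt n m (cnj t q) (cnj t p) * sg (card (t ` S - C' p)) * delta (mkg ?tg (cnj t p, {..<m} - C' p)) s)"
      unfolding C'_def by (rule sum.reindex_bij_betw[OF cnj_bij[OF t], symmetric])
    also have "\<dots> = (\<Sum>p\<in>?P. wt n m q p * sg (card (S - Y p)) * delta (transport k m t r (mkg g (p, X p))) s)"
    proof (rule sum.cong[OF refl])
      fix p assume "p \<in> ?P"
      then have p: "is_pairing m p" by simp
      have "wt n m (cnj t q) (cnj t p) = wt n m q p" unfolding wt_def using circ_cnj[OF t q p] by simp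
      moreover have "transport k m t r (mkg g (p, X p)) = mkg ?tg (cnj t p, {..<m} - C' p)"
        unfolding transport_mkg tX ..
      ultimately show "wt n m (cnj t q) (cnj t p) * sg (card (t ` S - C' p)) * delta (mkg ?tg (cnj t p, {..<m} - C' p)) s
          = wt n m q p * sg (card (S - Y p)) * delta (transport k m t r (mkg g (p, X p))) s"
        using cS by simp
    qed
    finally show ?thesis .
  qed
  have e: "M_op n m (\<lambda>s. delta g s - ?sr * delta ?tg s) = (\<lambda>s. M_gen n m g s - ?sr * M_gen n m ?tg s)"
    unfolding M_op_Kop by (simp add: Kop_diff Kop_scale fsupp_delta fsupp_scale Kop_delta)
  define E1 where "E1 p = (\<lambda>s. delta (mkg g (p, {..<m} - C p)) s - sg (card (({..<m} - C p) - ocan m p)) * delta (mkg g (p, ocan m p)) s)" for p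
  define E2 where "E2 p = (\<lambda>s. delta (mkg g (p, X p)) s - sg (card (X p - ocan m p)) * delta (mkg g (p, ocan m p)) s)" for p
  define E3 where "E3 p = (\<lambda>s. delta (mkg g (p, X p)) s - ?sr * delta (transport k m t r (mkg g (p, X p))) s)" for p
  have E1W: "E1 p \<in> og_rel Op act k m" if "p \<in> ?P" for p
    unfolding E1_def C_def using that by (intro chainW[OF g]) (simp_all add: cd_orient2[OF q])
  have E2W: "E2 p \<in> og_rel Op act k m" if "p \<in> ?P" for p
    unfolding E2_def using that Xo by (intro chainW[OF g]) simp_all
  have E3W: "E3 p \<in> og_rel Op act k m" if "p \<in> ?P" for p
  proof -
    have "(p, X p) \<in> Ifin m" using that Xo Ifin_iff by simp
    then have "valid_ograph Op k m (mkg g (p, X p))" by (rule valid_mkg[OF g])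
    then show ?thesis unfolding E3_def by (intro rel_in rel2[OF _ t r])
  qed
  have key: "sg (card (S - C p)) * sg (card (({..<m} - C p) - ocan m p)) = sg (card (S - Y p)) * sg (card (X p - ocan m p))"
    if "p \<in> ?P" for p
  proof -
    have p: "is_pairing m p" using that by simp
    show ?thesis unfolding X_def C_def
      by (rule sg_key[OF q p S cd_orient[OF q p] cd_orient2[OF q p] Yo[OF p]]) (use Xo[OF p] X_def in simp)
  qed
  define F where "F p = (\<lambda>s. sg (card (S - C p)) * E1 p s - sg (card (S - Y p)) * E2 p s + sg (card (S - Y p)) * E3 p s)" for p
  have FW: "F p \<in> og_rel Op act k m" if "p \<in> ?P" for p
    unfolding F_def using E1W[OF that] E2W[OF that] E3W[OF that]
    by (intro lcc_add[OF og_rel_lcc] lcc_diff[OF og_rel_lcc] lcc_scale[OF og_rel_lcc])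
  have "(\<lambda>s. M_gen n m g s - ?sr * M_gen n m ?tg s) = (\<lambda>s. \<Sum>p\<in>?P. wt n m q p * F p s)"
  proof
    fix s
    have "M_gen n m g s - ?sr * M_gen n m ?tg s = (\<Sum>p\<in>?P. wt n m q p * (sg (card (S - C p)) * delta (mkg g (p, {..<m} - C p)) s
        - ?sr * (sg (card (S - Y p)) * delta (transport k m t r (mkg g (p, X p))) s)))"
      unfolding Mg Mtg by (simp add: sum_subtractf sum_distrib_left right_diff_distrib mult_ac)
    also have "\<dots> = (\<Sum>p\<in>?P. wt n m q p * F p s)"
    proof (rule sum.cong[OF refl])
      fix p assume pP: "p \<in> ?P"
      have kp: "sg (card (S - C p)) * sg (card (({..<m} - C p) - ocan m p)) = sg (card (S - Y p)) * sg (card (X p - ocan m p))"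
        by (rule key[OF pP])
      show "wt n m q p * (sg (card (S - C p)) * delta (mkg g (p, {..<m} - C p)) s
        - ?sr * (sg (card (S - Y p)) * delta (transport k m t r (mkg g (p, X p))) s)) = wt n m q p * F p s"
        unfolding F_def E1_def E2_def E3_def using kp by (simp add: algebra_simps)
    qed
    finally show "M_gen n m g s - ?sr * M_gen n m ?tg s = (\<Sum>p\<in>?P. wt n m q p * F p s)" .
  qed
  moreover have "(\<lambda>s. \<Sum>p\<in>?P. wt n m q p * F p s) \<in> og_rel Op act k m"
    by (rule lcc_sum[OF og_rel_lcc finite_Prs FW])
  ultimately show ?thesis unfolding e by simp
qed


definition Lin :: "(('b \<Rightarrow> real) \<Rightarrow> ('b \<Rightarrow> real)) \<Rightarrow> bool" where
  "Lin T \<longleftrightarrow> (\<forall>(A::nat set) a F. finite A \<longrightarrow> (\<forall>i\<in>A. fsupp (F i)) \<longrightarrow>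
      T (\<lambda>s. \<Sum>i\<in>A. a i * F i s) = (\<lambda>s. \<Sum>i\<in>A. a i * T (F i) s))
   \<and> (\<forall>f. fsupp f \<longrightarrow> fsupp (T f))"

lemma LinD: "Lin T \<Longrightarrow> finite (A::nat set) \<Longrightarrow> (\<And>i. i \<in> A \<Longrightarrow> fsupp (F i)) \<Longrightarrow>
      T (\<lambda>s. \<Sum>i\<in>A. a i * F i s) = (\<lambda>s. \<Sum>i\<in>A. a i * T (F i) s)"
  unfolding Lin_def by blast
lemma LinF: "Lin T \<Longrightarrow> fsupp f \<Longrightarrow> fsupp (T f)"
  unfolding Lin_def by blast

lemma fsupp_M_gen: "fsupp (M_gen n m g)"
proof -
  have "{s. M_gen n m g s \<noteq> 0} \<subseteq> regluing m g ` {p. is_pairing m p}"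
  proof
    fix s assume "s \<in> {s. M_gen n m g s \<noteq> 0}"
    then have "(\<Sum>p\<in>{p. is_pairing m p}. (2 * real n) ^ num_circles m (gpair g) p * regluing_sign m g p * delta (regluing m g p) s) \<noteq> 0"
      unfolding M_gen_def by simp
    then obtain p where "p \<in> {p. is_pairing m p}" "(2 * real n) ^ num_circles m (gpair g) p * regluing_sign m g p * delta (regluing m g p) s \<noteq> 0"
      by (rule sum.not_neutral_contains_not_neutral)
    then have "is_pairing m p" "delta (regluing m g p) s \<noteq> 0" by auto
    then show "s \<in> regluing m g ` {p. is_pairing m p}" unfolding delta_def by (auto split: if_splits)
  qed
  then show ?thesis unfolding fsupp_def by (rule finite_subset) (simp add: finite_Prs)
qed

lemma Lin_M_op: "Lin (M_op n m)"
  unfolding Lin_def M_op_Kop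
proof (intro conjI allI impI)
  fix A :: "nat set" and a :: "nat \<Rightarrow> real" and F :: "nat \<Rightarrow> 'a ograph \<Rightarrow> real"
  assume A: "finite A" and F: "\<forall>i\<in>A. fsupp (F i)"
  show "Kop (M_gen n m) (\<lambda>s. \<Sum>i\<in>A. a i * F i s) = (\<lambda>s. \<Sum>i\<in>A. a i * Kop (M_gen n m) (F i) s)"
    by (rule Kop_sum[OF A]) (use F in blast)
next
  fix f :: "'a ograph \<Rightarrow> real" assume "fsupp f"
  then show "fsupp (Kop (M_gen n m) f)" by (rule fsupp_Kop) (rule fsupp_M_gen)
qed

lemma Lin_pow: fixes T :: "('b \<Rightarrow> real) \<Rightarrow> ('b \<Rightarrow> real)" shows "Lin T \<Longrightarrow> Lin (T ^^ j)"
proof (induction j)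
  case 0 then show ?case unfolding Lin_def by simp
next
  case (Suc j)
  have IH: "Lin (T ^^ j)" using Suc.IH Suc.prems by blast
  show ?case unfolding Lin_def
  proof (intro conjI allI impI)
    fix A :: "nat set" and a :: "nat \<Rightarrow> real" and F :: "nat \<Rightarrow> 'b \<Rightarrow> real" assume A: "finite A" and F: "\<forall>i\<in>A. fsupp (F i)"
    have "(T ^^ Suc j) (\<lambda>s. \<Sum>i\<in>A. a i * F i s) = T ((T ^^ j) (\<lambda>s. \<Sum>i\<in>A. a i * F i s))" by simp
    also have "\<dots> = T (\<lambda>s. \<Sum>i\<in>A. a i * (T ^^ j) (F i) s)" using LinD[OF IH A] F by simp
    also have "\<dots> = (\<lambda>s. \<Sum>i\<in>A. a i * T ((T ^^ j) (F i)) s)"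
      by (rule LinD[OF Suc.prems A]) (use LinF[OF IH] F in blast)
    finally show "(T ^^ Suc j) (\<lambda>s. \<Sum>i\<in>A. a i * F i s) = (\<lambda>s. \<Sum>i\<in>A. a i * (T ^^ Suc j) (F i) s)" by simp
  next
    fix f :: "'b \<Rightarrow> real" assume "fsupp f"
    then show "fsupp ((T ^^ Suc j) f)" using LinF[OF Suc.prems] LinF[OF IH] by simp
  qed
qed

lemma Lin_add: "Lin T \<Longrightarrow> fsupp f \<Longrightarrow> fsupp h \<Longrightarrow> T (\<lambda>s. f s + h s) = (\<lambda>s. T f s + T h s)"
proof -
  assume T: "Lin T" and f: "fsupp f" and h: "fsupp h"
  have "T (\<lambda>s. \<Sum>i\<in>{0::nat, 1}. 1 * (if i = 0 then f else h) s) = (\<lambda>s. \<Sum>i\<in>{0::nat, 1}. 1 * T (if i = 0 then f else h) s)"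
    by (rule LinD[OF T]) (use f h in auto)
  then show ?thesis by simp
qed

lemma Lin_scale: "Lin T \<Longrightarrow> fsupp f \<Longrightarrow> T (\<lambda>s. a * f s) = (\<lambda>s. a * T f s)"
proof -
  assume T: "Lin T" and f: "fsupp f"
  have "T (\<lambda>s. \<Sum>i\<in>{0::nat}. a * f s) = (\<lambda>s. \<Sum>i\<in>{0::nat}. a * T f s)"
    using LinD[OF T, of "{0}" "\<lambda>_. f" "\<lambda>_. a"] f by simp
  then show ?thesis by simp
qed

lemma Lin_diff: "Lin T \<Longrightarrow> fsupp f \<Longrightarrow> fsupp h \<Longrightarrow> T (\<lambda>s. f s - h s) = (\<lambda>s. T f s - T h s)"
proof -
  assume T: "Lin T" and f: "fsupp f" and h: "fsupp h"
  have "T (\<lambda>s. f s + (-1) * h s) = (\<lambda>s. T f s + T (\<lambda>s. (-1) * h s) s)"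
    by (rule Lin_add[OF T f fsupp_scale[OF h]])
  also have "T (\<lambda>s. (-1) * h s) = (\<lambda>s. (-1) * T h s)" by (rule Lin_scale[OF T h])
  finally show ?thesis by simp
qed

definition lamop :: "(('b \<Rightarrow> real) \<Rightarrow> ('b \<Rightarrow> real)) \<Rightarrow> (nat \<Rightarrow> real) \<Rightarrow> nat \<Rightarrow> nat \<Rightarrow> ('b \<Rightarrow> real) \<Rightarrow> 'b \<Rightarrow> real" where
  "lamop T c a e f = (\<lambda>s. - (1 / c a) * (\<Sum>i<e. c (a + 1 + i) * (T ^^ i) f s))"

lemma lift_lam: "lamop (M_op n m) c a e (lift m g v) = lift m g (lamop (bt n m) c a e v)"
proof -
  have "lamop (M_op n m) c a e (lift m g v) = (\<lambda>s. - (1 / c a) * (\<Sum>i<e. c (a + 1 + i) * lift m g ((bt n m ^^ i) v) s))"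
    unfolding lamop_def M_op_pow_lift ..
  also have "\<dots> = (\<lambda>s. - (1 / c a) * lift m g (\<lambda>j. \<Sum>i<e. c (a + 1 + i) * (bt n m ^^ i) v j) s)"
    using lift_sum[of "{..<e}" m g "\<lambda>i. c (a + 1 + i)" "\<lambda>i. (bt n m ^^ i) v"] by simp
  also have "\<dots> = lift m g (lamop (bt n m) c a e v)"
    unfolding lamop_def using lift_scale[of m g "- (1 / c a)"] by simp
  finally show ?thesis .
qed

definition inU :: "nat \<Rightarrow> ((nat \<Rightarrow> nat) \<times> nat set \<Rightarrow> real) \<Rightarrow> bool" where
  "inU m v \<longleftrightarrow> (\<forall>j. j \<notin> Ifin m \<longrightarrow> v j = 0)"

lemma inU_bt: "inU m (bt n m v)" unfolding inU_def using bt_U by blast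
lemma inU_pow: "inU m v \<Longrightarrow> inU m ((bt n m ^^ i) v)"
  by (cases i) (simp_all add: inU_bt del: funpow.simps, simp add: inU_bt)

lemma bt_pow_lin: assumes A: "finite (A::'r set)"
  shows "(bt n m ^^ j) (\<lambda>x. \<Sum>r\<in>A. a r * F r x) = (\<lambda>x. \<Sum>r\<in>A. a r * (bt n m ^^ j) (F r) x)"
proof (induction j)
  case 0 then show ?case by simp
next
  case (Suc j) then show ?case by (simp add: bt_sum[OF A])
qed

lemma inj_pow_UF: assumes n: "card {p. is_pairing m p} < 2 * n"
  shows "inU m w \<Longrightarrow> (bt n m ^^ a) w \<in> UF m \<Longrightarrow> w \<in> UF m"
proof (induction a arbitrary: w)
  case 0 then show ?case by simp
next
  case (Suc a)
  have "(bt n m ^^ a) (bt n m w) \<in> UF m" using Suc.prems(2) by (simp add: funpow_swap1)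
  then have "bt n m w \<in> UF m" using Suc.IH inU_bt by blast
  then show ?case using inj_UF[OF n, of w] Suc.prems(1) unfolding inU_def by blast
qed

lemma sum_split_a: "(\<Sum>j\<le>(a::nat) + (e::nat). f j) = (\<Sum>j<a. f j) + f a + (\<Sum>i<e. f (a + 1 + i))"
proof (induction e)
  case 0 then show ?case by (simp add: lessThan_Suc_atMost[symmetric])
next
  case (Suc e)
  have e1: "a + Suc e = Suc (a + e)" "a + 1 + e = Suc (a + e)" by simp_all
  show ?case unfolding e1(1) sum.atMost_Suc sum.lessThan_Suc Suc.IH e1(2) by (simp add: add.assoc)
qed

lemma Suc_img: "Suc ` {..<e} = {1..(e::nat)}"
proof (intro set_eqI iffI)
  fix y assume "y \<in> Suc ` {..<e}" then show "y \<in> {1..e}" by auto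
next
  fix y assume y: "y \<in> {1..e}"
  then have "y = Suc (y - 1)" "y - 1 \<in> {..<e}" by auto
  then show "y \<in> Suc ` {..<e}" by (rule image_eqI)
qed

lemma U_key:
  assumes n: "card {p. is_pairing m p} < 2 * n" and v: "inU m v"
    and ca: "c a \<noteq> 0" and below: "\<And>j. j < a \<Longrightarrow> c j = 0"
    and ann: "(\<lambda>x. \<Sum>j\<le>a + e. c j * (bt n m ^^ j) v x) = (\<lambda>x. 0)"
  shows "(\<lambda>x. bt n m (lamop (bt n m) c a e v) x - v x) \<in> UF m"
proof -
  let ?B = "bt n m"
  define w where "w = (\<lambda>x. c a * v x + (\<Sum>i<e. c (a + 1 + i) * (?B ^^ Suc i) v x))"
  have Bw: "(?B ^^ a) w = (\<lambda>x. \<Sum>j\<le>a + e. c j * (?B ^^ j) v x)"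
  proof -
    have w2: "w = (\<lambda>x. \<Sum>i\<in>{0::nat} \<union> {1..e}. (if i = 0 then c a else c (a + i)) * (?B ^^ i) v x)"
    proof
      fix x
      have "(\<Sum>i\<in>{0::nat} \<union> {1..e}. (if i = 0 then c a else c (a + i)) * (?B ^^ i) v x)
          = c a * v x + (\<Sum>i\<in>{1..e}. c (a + i) * (?B ^^ i) v x)"
        by (subst sum.union_disjoint) auto
      also have "(\<Sum>i\<in>{1..e}. c (a + i) * (?B ^^ i) v x) = (\<Sum>i<e. c (a + 1 + i) * (?B ^^ Suc i) v x)"
      proof -
        have "{1..e} = Suc ` {..<e}" by (rule Suc_img[symmetric])
        then show ?thesis by (simp add: sum.reindex)
      qed
      finally show "w x = (\<Sum>i\<in>{0::nat} \<union> {1..e}. (if i = 0 then c a else c (a + i)) * (?B ^^ i) v x)"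
        unfolding w_def by simp
    qed
    have "(?B ^^ a) w = (\<lambda>x. \<Sum>i\<in>{0::nat} \<union> {1..e}. (if i = 0 then c a else c (a + i)) * (?B ^^ a) ((?B ^^ i) v) x)"
      unfolding w2 by (rule bt_pow_lin) simp
    also have "\<dots> = (\<lambda>x. c a * (?B ^^ a) v x + (\<Sum>i<e. c (a + 1 + i) * (?B ^^ (a + 1 + i)) v x))"
    proof
      fix x
      have "(\<Sum>i\<in>{0::nat} \<union> {1..e}. (if i = 0 then c a else c (a + i)) * (?B ^^ a) ((?B ^^ i) v) x)
          = c a * (?B ^^ a) v x + (\<Sum>i\<in>{1..e}. c (a + i) * (?B ^^ (a + i)) v x)"
        by (subst sum.union_disjoint) (auto simp: funpow_add)
      also have "(\<Sum>i\<in>{1..e}. c (a + i) * (?B ^^ (a + i)) v x) = (\<Sum>i<e. c (a + 1 + i) * (?B ^^ (a + 1 + i)) v x)"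
      proof -
        have "{1..e} = Suc ` {..<e}" by (rule Suc_img[symmetric])
        then show ?thesis by (simp add: sum.reindex)
      qed
      finally show "(\<Sum>i\<in>{0::nat} \<union> {1..e}. (if i = 0 then c a else c (a + i)) * (?B ^^ a) ((?B ^^ i) v) x)
          = c a * (?B ^^ a) v x + (\<Sum>i<e. c (a + 1 + i) * (?B ^^ (a + 1 + i)) v x)" .
    qed
    also have "\<dots> = (\<lambda>x. \<Sum>j\<le>a + e. c j * (?B ^^ j) v x)"
      by (rule ext, subst sum_split_a) (simp add: below)
    finally show ?thesis .
  qed
  have wU: "inU m w"
    unfolding inU_def
  proof (intro allI impI)
    fix j assume j: "j \<notin> Ifin m"
    have "v j = 0" using v j unfolding inU_def by blast
    moreover have "(?B ^^ Suc i) v j = 0" for i using bt_U[OF j] by simp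
    ultimately show "w j = 0" unfolding w_def by simp
  qed
  have "(?B ^^ a) w \<in> UF m" using Bw ann lcc_zero[OF lcc_UF] by simp
  then have "w \<in> UF m" by (rule inj_pow_UF[OF n wU])
  moreover have "w = (\<lambda>x. (- c a) * (bt n m (lamop (bt n m) c a e v) x - v x))"
  proof -
    have "bt n m (lamop (bt n m) c a e v) = (\<lambda>x. - (1 / c a) * bt n m (\<lambda>j. \<Sum>i<e. c (a + 1 + i) * (?B ^^ i) v j) x)"
      unfolding lamop_def by (rule bt_scale)
    also have "bt n m (\<lambda>j. \<Sum>i<e. c (a + 1 + i) * (?B ^^ i) v j) = (\<lambda>x. \<Sum>i<e. c (a + 1 + i) * (?B ^^ Suc i) v x)"
      by (simp add: bt_sum)
    finally have bl: "bt n m (lamop (bt n m) c a e v) = (\<lambda>x. - (1 / c a) * (\<Sum>i<e. c (a + 1 + i) * (?B ^^ Suc i) v x))" .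
    have cc: "c a * (1 / c a) = 1" using ca by simp
    show ?thesis
    proof
      fix x
      let ?S = "\<Sum>i<e. c (a + 1 + i) * (?B ^^ Suc i) v x"
      have "(- c a) * (- (1 / c a) * ?S - v x) = (c a * (1 / c a)) * ?S + c a * v x" by (simp add: algebra_simps)
      also have "\<dots> = c a * v x + ?S" using cc by simp
      finally show "w x = (- c a) * (bt n m (lamop (bt n m) c a e v) x - v x)" unfolding w_def bl by simp
    qed
  qed
  ultimately have "(\<lambda>x. (- c a) * (bt n m (lamop (bt n m) c a e v) x - v x)) \<in> UF m" by simp
  then have "(\<lambda>x. (- 1 / c a) * ((- c a) * (bt n m (lamop (bt n m) c a e v) x - v x))) \<in> UF m"
    by (rule lcc_scale[OF lcc_UF])
  moreover have "(- 1 / c a) * ((- c a) * y) = y" for y using ca by simp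
  ultimately show ?thesis by simp
qed


lemma V_lcc: "lcc (free_og Op k m)"
  unfolding lcc_def
proof (intro conjI ballI allI)
  show "(\<lambda>s. 0) \<in> free_og Op k m" unfolding free_og_def by simp
next
  fix f h assume f: "f \<in> free_og Op k m" and h: "h \<in> free_og Op k m"
  have "finite {g. f g + h g \<noteq> 0}"
    by (rule finite_subset[of _ "{g. f g \<noteq> 0} \<union> {g. h g \<noteq> 0}"]) (use f h in \<open>auto simp: free_og_def\<close>)
  moreover have "\<forall>g. f g + h g \<noteq> 0 \<longrightarrow> valid_ograph Op k m g"
  proof (intro allI impI)
    fix g assume "f g + h g \<noteq> 0"
    then have "f g \<noteq> 0 \<or> h g \<noteq> 0" by auto
    then show "valid_ograph Op k m g" using f h unfolding free_og_def by blast
  qed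
  ultimately show "(\<lambda>s. f s + h s) \<in> free_og Op k m" unfolding free_og_def by simp
next
  fix f a assume f: "f \<in> free_og Op k m"
  have "finite {g. a * f g \<noteq> 0}"
    by (rule finite_subset[of _ "{g. f g \<noteq> 0}"]) (use f in \<open>auto simp: free_og_def\<close>)
  moreover have "\<forall>g. a * f g \<noteq> 0 \<longrightarrow> valid_ograph Op k m g" using f unfolding free_og_def by auto
  ultimately show "(\<lambda>s. a * f s) \<in> free_og Op k m" unfolding free_og_def by simp
qed

lemma V_fsupp: "f \<in> free_og Op k m \<Longrightarrow> fsupp f" unfolding free_og_def fsupp_def by simp

lemma M_op_V: assumes f: "f \<in> free_og Op k m" shows "M_op n m f \<in> free_og Op k m"
proof -
  have fs: "fsupp (M_op n m f)" using LinF[OF Lin_M_op V_fsupp[OF f]] .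
  have "valid_ograph Op k m s" if s: "M_op n m f s \<noteq> 0" for s
  proof -
    have "(\<Sum>g\<in>{g. f g \<noteq> 0}. f g * M_gen n m g s) \<noteq> 0" using s unfolding M_op_def by simp
    then obtain g where g: "g \<in> {g. f g \<noteq> 0}" "f g * M_gen n m g s \<noteq> 0"
      by (rule sum.not_neutral_contains_not_neutral)
    have vg: "valid_ograph Op k m g" using g(1) f unfolding free_og_def by blast
    have "M_gen n m g s \<noteq> 0" using g(2) by simp
    then have "(\<Sum>p\<in>{p. is_pairing m p}. (2 * real n) ^ num_circles m (gpair g) p * regluing_sign m g p * delta (regluing m g p) s) \<noteq> 0"
      unfolding M_gen_def by simp
    then obtain p where "p \<in> {p. is_pairing m p}" "(2 * real n) ^ num_circles m (gpair g) p * regluing_sign m g p * delta (regluing m g p) s \<noteq> 0"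
      by (rule sum.not_neutral_contains_not_neutral)
    then have p: "is_pairing m p" "s = regluing m g p" unfolding delta_def by (auto split: if_splits)
    show ?thesis unfolding p(2) by (rule valid_regluing[OF vg p(1)])
  qed
  then show ?thesis using fs unfolding free_og_def fsupp_def by blast
qed

lemma Mop_rel: assumes r: "r \<in> og_relations Op act k m"
  shows "fsupp r \<and> Kop (M_gen n m) r \<in> og_rel Op act k m"
  using r unfolding og_relations_def
proof (elim UnE)
  assume "r \<in> {(\<lambda>s. delta g s + delta (flip_edge g x) s) | g x. valid_ograph Op k m g \<and> x < m}"
  then obtain g x where gx: "r = (\<lambda>s. delta g s + delta (flip_edge g x) s)" "valid_ograph Op k m g" "x < m" by blast
  show ?thesis using Mop_flip[OF gx(2,3), where n=n and act=act] unfolding gx(1) M_op_Kop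
    by (simp add: fsupp_add fsupp_delta)
next
  assume "r \<in> {(\<lambda>s. delta g s - real_of_int (sign r) * delta (transport k m t r g) s) | g t r.
        valid_ograph Op k m g \<and> t permutes {..<m} \<and> r permutes {..<k}}"
  then obtain g t rr where gx: "r = (\<lambda>s. delta g s - real_of_int (sign rr) * delta (transport k m t rr g) s)"
    "valid_ograph Op k m g" "t permutes {..<m}" "rr permutes {..<k}" by blast
  show ?thesis using Mop_transport[OF gx(2,3,4), where n=n and act=act] unfolding gx(1) M_op_Kop
    by (simp add: fsupp_diff fsupp_scale fsupp_delta)
next
  assume "r \<in> {(\<lambda>s. delta g s - delta (relabel_spider act m g v p) s) | g v p.
        valid_ograph Op k m g \<and> v < k \<and> p permutes {..<valence m g v}}"
  then obtain g v p where gx: "r = (\<lambda>s. delta g s - delta (relabel_spider act m g v p) s)"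
    "valid_ograph Op k m g" "v < k" "p permutes {..<valence m g v}" by blast
  show ?thesis using Mop_relabel[OF gx(2,3,4), where n=n] unfolding gx(1) M_op_Kop
    by (simp add: fsupp_diff fsupp_delta)
next
  assume "r \<in> {(\<lambda>s. delta (set_color g v (c *\<^sub>R a + d *\<^sub>R b)) s - c * delta (set_color g v a) s
           - d * delta (set_color g v b) s) | g v a b c d.
        valid_ograph Op k m g \<and> v < k \<and> a \<in> Op (valence m g v - 1) \<and> b \<in> Op (valence m g v - 1)}"
  then obtain g v a b c d where gx: "r = (\<lambda>s. delta (set_color g v (c *\<^sub>R a + d *\<^sub>R b)) s - c * delta (set_color g v a) s
           - d * delta (set_color g v b) s)"
    "valid_ograph Op k m g" "v < k" "a \<in> Op (valence m g v - 1)" "b \<in> Op (valence m g v - 1)" by blast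
  show ?thesis using Mop_setcolor[OF gx(2,3,4,5), where n=n and act=act and c=c and d=d] unfolding gx(1) M_op_Kop
    by (simp add: fsupp_diff fsupp_scale fsupp_delta)
qed

lemma M_op_W: assumes f: "f \<in> og_rel Op act k m" shows "M_op n m f \<in> og_rel Op act k m \<and> fsupp f"
proof -
  have G: "\<And>r. r \<in> og_relations Op act k m \<Longrightarrow> fsupp r \<and> Kop (M_gen n m) r \<in> fspan (og_relations Op act k m)"
    using Mop_rel[unfolded og_rel_def] by blast
  have "Kop (M_gen n m) f \<in> fspan (og_relations Op act k m) \<and> fsupp f"
    by (rule lcc_Kop_fspan[OF fspan_lcc G]) (use f in \<open>unfold og_rel_def\<close>)
  then show ?thesis unfolding M_op_Kop og_rel_def .
qed

lemma pow_V: "f \<in> free_og Op k m \<Longrightarrow> (M_op n m ^^ i) f \<in> free_og Op k m"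
  by (induction i) (simp_all add: M_op_V)
lemma pow_W: "f \<in> og_rel Op act k m \<Longrightarrow> (M_op n m ^^ i) f \<in> og_rel Op act k m"
  by (induction i) (simp_all add: M_op_W)

lemma lam_closed: assumes X: "lcc X" and cl: "\<And>f i. f \<in> X \<Longrightarrow> (M_op n m ^^ i) f \<in> X"
  shows "f \<in> X \<Longrightarrow> lamop (M_op n m) c a e f \<in> X"
proof -
  assume f: "f \<in> X"
  have "(\<lambda>s. \<Sum>i<e. c (a + 1 + i) * (M_op n m ^^ i) f s) \<in> X"
    by (rule lcc_sum[OF X]) (use cl f in auto)
  then show ?thesis unfolding lamop_def by (rule lcc_scale[OF X])
qed

lemma Lin_lam: "Lin (lamop (M_op n m) c a e)"
  unfolding Lin_def
proof (intro conjI allI impI)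
  fix A :: "nat set" and b :: "nat \<Rightarrow> real" and F :: "nat \<Rightarrow> 'a ograph \<Rightarrow> real"
  assume A: "finite A" and F: "\<forall>i\<in>A. fsupp (F i)"
  have P: "(M_op n m ^^ j) (\<lambda>s. \<Sum>i\<in>A. b i * F i s) = (\<lambda>s. \<Sum>i\<in>A. b i * (M_op n m ^^ j) (F i) s)" for j
    by (rule LinD[OF Lin_pow[OF Lin_M_op] A]) (use F in blast)
  show "lamop (M_op n m) c a e (\<lambda>s. \<Sum>i\<in>A. b i * F i s) = (\<lambda>s. \<Sum>i\<in>A. b i * lamop (M_op n m) c a e (F i) s)"
    unfolding lamop_def P
    by (rule ext) (simp add: sum_distrib_left sum.swap[of _ "{..<e}" A] mult_ac)
next
  fix f :: "'a ograph \<Rightarrow> real" assume f: "fsupp f"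
  have "fsupp (\<lambda>s. \<Sum>i<e. c (a + 1 + i) * (M_op n m ^^ i) f s)"
    by (rule fsupp_sum) (use LinF[OF Lin_pow[OF Lin_M_op] f] in auto)
  then show "fsupp (lamop (M_op n m) c a e f)" unfolding lamop_def by (rule fsupp_scale)
qed

lemma lam_comm: assumes f: "fsupp f"
  shows "lamop (M_op n m) c a e (M_op n m f) = M_op n m (lamop (M_op n m) c a e f)"
proof -
  have fs: "fsupp ((M_op n m ^^ i) f)" for i using LinF[OF Lin_pow[OF Lin_M_op] f] .
  have "M_op n m (lamop (M_op n m) c a e f) = (\<lambda>s. - (1 / c a) * M_op n m (\<lambda>s. \<Sum>i<e. c (a + 1 + i) * (M_op n m ^^ i) f s) s)"
    unfolding lamop_def by (rule Lin_scale[OF Lin_M_op]) (rule fsupp_sum, simp_all add: fs)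
  also have "M_op n m (\<lambda>s. \<Sum>i<e. c (a + 1 + i) * (M_op n m ^^ i) f s) = (\<lambda>s. \<Sum>i<e. c (a + 1 + i) * M_op n m ((M_op n m ^^ i) f) s)"
    by (rule LinD[OF Lin_M_op]) (simp_all add: fs)
  finally show ?thesis unfolding lamop_def by (simp add: funpow_swap1)
qed

lemma Lin_comp: fixes T1 T2 :: "('b \<Rightarrow> real) \<Rightarrow> ('b \<Rightarrow> real)"
  assumes T1: "Lin T1" and T2: "Lin T2" shows "Lin (T1 \<circ> T2)"
  unfolding Lin_def
proof (intro conjI allI impI)
  fix A :: "nat set" and b :: "nat \<Rightarrow> real" and F :: "nat \<Rightarrow> 'b \<Rightarrow> real"
  assume A: "finite A" and F: "\<forall>i\<in>A. fsupp (F i)"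
  have "T2 (\<lambda>s. \<Sum>i\<in>A. b i * F i s) = (\<lambda>s. \<Sum>i\<in>A. b i * T2 (F i) s)"
    by (rule LinD[OF T2 A]) (use F in blast)
  moreover have "T1 (\<lambda>s. \<Sum>i\<in>A. b i * T2 (F i) s) = (\<lambda>s. \<Sum>i\<in>A. b i * T1 (T2 (F i)) s)"
    by (rule LinD[OF T1 A]) (use F LinF[OF T2] in blast)
  ultimately show "(T1 \<circ> T2) (\<lambda>s. \<Sum>i\<in>A. b i * F i s) = (\<lambda>s. \<Sum>i\<in>A. b i * (T1 \<circ> T2) (F i) s)"
    by simp
next
  fix f :: "'b \<Rightarrow> real" assume "fsupp f"
  then show "fsupp ((T1 \<circ> T2) f)" using LinF[OF T1] LinF[OF T2] by simp
qed

lemma delta_expand: assumes f: "fsupp f" shows "f = (\<lambda>s. \<Sum>g\<in>{g. f g \<noteq> 0}. f g * delta g s)"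
proof
  fix s
  have fin: "finite {g. f g \<noteq> 0}" using f unfolding fsupp_def .
  show "f s = (\<Sum>g\<in>{g. f g \<noteq> 0}. f g * delta g s)"
  proof (cases "f s = 0")
    case True
    have "(\<Sum>g\<in>{g. f g \<noteq> 0}. f g * delta g s) = 0"
      by (rule sum.neutral) (use True in \<open>auto simp: delta_def\<close>)
    then show ?thesis using True by simp
  next
    case False
    have "(\<Sum>g\<in>{g. f g \<noteq> 0}. f g * delta g s) = (\<Sum>g\<in>{g. f g \<noteq> 0}. if g = s then f g else 0)"
      by (rule sum.cong) (auto simp: delta_def)
    then show ?thesis using False fin by (simp add: sum.delta')
  qed
qed

theorem main_iso:
  "\<exists>N. \<forall>n\<ge>N. induces_iso_on_quotient (free_og Op k m) (og_rel Op act k m) (M_op n m)"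
proof (intro exI allI impI)
  fix n assume nN: "card {p. is_pairing m p} + 1 \<le> n"
  then have n: "card {p. is_pairing m p} < 2 * n" by simp
  let ?V = "free_og Op k m" and ?W = "og_rel Op act k m" and ?L = "M_op n m"
  obtain c d where cd: "\<exists>j\<le>d. c j \<noteq> 0"
    "\<forall>v. (\<forall>j. j \<notin> Ifin m \<longrightarrow> v j = 0) \<longrightarrow> (\<lambda>x. \<Sum>j\<le>d. c j * (bt n m ^^ j) v x) = (\<lambda>x. 0)"
    using poly_annih[OF finite_Ifin, of "bt n m", OF bt_sum bt_U] by blast
  define a where "a = (LEAST j. c j \<noteq> 0)"
  obtain j0 where j0: "j0 \<le> d" "c j0 \<noteq> 0" using cd(1) by blast
  have ca: "c a \<noteq> 0" unfolding a_def by (rule LeastI[of _ j0]) (rule j0(2))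
  have ad: "a \<le> d" unfolding a_def using Least_le[of "\<lambda>j. c j \<noteq> 0" j0] j0 by simp
  have below: "\<And>j. j < a \<Longrightarrow> c j = 0" unfolding a_def using not_less_Least by blast
  define e where "e = d - a"
  have de: "d = a + e" unfolding e_def using ad by simp
  let ?La = "lamop ?L c a e"
  have K1: "?La f \<in> ?V" if "f \<in> ?V" for f by (rule lam_closed[OF V_lcc pow_V that])
  have K2: "?La f \<in> ?W" if "f \<in> ?W" for f by (rule lam_closed[OF og_rel_lcc pow_W that])
  have K3d: "(\<lambda>s. ?L (?La (delta g)) s - delta g s) \<in> ?W" if g: "valid_ograph Op k m g" for g
  proof -
    let ?i = "(gpair g, gst g)"
    have i: "?i \<in> Ifin m" by (rule valid_Ifin[OF g])
    have dg: "delta g = lift m g (delta ?i)" using lift_delta[OF i, of g] mkg_self[of g] by simp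
    have "?L (?La (delta g)) = lift m g (bt n m (lamop (bt n m) c a e (delta ?i)))"
      unfolding dg lift_lam M_op_lift ..
    then have "(\<lambda>s. ?L (?La (delta g)) s - delta g s) = lift m g (\<lambda>x. bt n m (lamop (bt n m) c a e (delta ?i)) x - delta ?i x)"
      unfolding lift_diff by (simp add: dg[symmetric])
    moreover have "(\<lambda>x. bt n m (lamop (bt n m) c a e (delta ?i)) x - delta ?i x) \<in> UF m"
    proof -
      have iU: "inU m (delta ?i)" unfolding inU_def delta_def using i by auto
      have "\<forall>j. j \<notin> Ifin m \<longrightarrow> delta ?i j = 0" using i by (auto simp: delta_def)
      then have "(\<lambda>x. \<Sum>j\<le>d. c j * (bt n m ^^ j) (delta ?i) x) = (\<lambda>x. 0)" using cd(2) by blast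
      then have ann: "(\<lambda>x. \<Sum>j\<le>a + e. c j * (bt n m ^^ j) (delta ?i) x) = (\<lambda>x. 0)" unfolding de .
      show ?thesis by (rule U_key[OF n iU ca below ann])
    qed
    ultimately show ?thesis using lift_UF[OF g] by simp
  qed
  have K3: "(\<lambda>s. ?L (?La f) s - f s) \<in> ?W" if f: "f \<in> ?V" for f
  proof -
    have fs: "fsupp f" by (rule V_fsupp[OF f])
    let ?G = "{g. f g \<noteq> 0}"
    have fin: "finite ?G" using fs unfolding fsupp_def .
    have LL: "Lin (?L \<circ> ?La)" by (rule Lin_comp[OF Lin_M_op Lin_lam])
    have fe: "f = (\<lambda>s. \<Sum>g\<in>?G. f g * delta g s)" by (rule delta_expand[OF fs])
    have "(?L \<circ> ?La) (\<lambda>s. \<Sum>g\<in>?G. f g * delta g s) = (\<lambda>s. \<Sum>g\<in>?G. f g * (?L \<circ> ?La) (delta g) s)"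
    proof -
      obtain h where h: "bij_betw h {0..<card ?G} ?G" using ex_bij_betw_nat_finite[OF fin] by blast
      have r1: "(\<lambda>s. \<Sum>g\<in>?G. f g * delta g s) = (\<lambda>s. \<Sum>i\<in>{0..<card ?G}. f (h i) * delta (h i) s)"
        by (rule ext, rule sum.reindex_bij_betw[OF h, symmetric])
      have r2: "(\<lambda>s. \<Sum>g\<in>?G. f g * (?L \<circ> ?La) (delta g) s) = (\<lambda>s. \<Sum>i\<in>{0..<card ?G}. f (h i) * (?L \<circ> ?La) (delta (h i)) s)"
        by (rule ext, rule sum.reindex_bij_betw[OF h, symmetric])
      show ?thesis unfolding r1 r2 by (rule LinD[OF LL]) (simp_all add: fsupp_delta)
    qed
    then have "(\<lambda>s. ?L (?La f) s - f s) = (\<lambda>s. \<Sum>g\<in>?G. f g * (?L (?La (delta g)) s - delta g s))"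
      by (subst (1 2) fe) (simp add: right_diff_distrib sum_subtractf)
    moreover have "(\<lambda>s. \<Sum>g\<in>?G. f g * (?L (?La (delta g)) s - delta g s)) \<in> ?W"
      by (rule lcc_sum[OF og_rel_lcc fin]) (use K3d f in \<open>auto simp: free_og_def\<close>)
    ultimately show ?thesis by simp
  qed
  show "induces_iso_on_quotient ?V ?W ?L"
    unfolding induces_iso_on_quotient_def
  proof (intro conjI ballI impI)
    fix f assume "f \<in> ?V" then show "?L f \<in> ?V" by (rule M_op_V)
  next
    fix f assume "f \<in> ?W" then show "?L f \<in> ?W" using M_op_W by blast
  next
    fix f assume f: "f \<in> ?V" and Lf: "?L f \<in> ?W"
    have "?La (?L f) \<in> ?W" by (rule K2[OF Lf])
    then have a1: "?L (?La f) \<in> ?W" using lam_comm[OF V_fsupp[OF f]] by simp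
    have "(\<lambda>s. ?L (?La f) s - (?L (?La f) s - f s)) \<in> ?W"
      by (rule lcc_diff[OF og_rel_lcc a1 K3[OF f]])
    then show "f \<in> ?W" by simp
  next
    fix h assume h: "h \<in> ?V"
    show "\<exists>f\<in>?V. (\<lambda>s. ?L f s - h s) \<in> ?W"
      by (rule bexI[of _ "?La h"]) (use K3[OF h] K1[OF h] in auto)
  qed
qed


theorem proposition2p22:
  fixes Op :: "nat \<Rightarrow> 'a::real_vector set"
    and e :: 'a
    and ocomp :: "nat \<Rightarrow> nat \<Rightarrow> nat \<Rightarrow> 'a \<Rightarrow> 'a \<Rightarrow> 'a"
    and act :: "nat \<Rightarrow> (nat \<Rightarrow> nat) \<Rightarrow> 'a \<Rightarrow> 'a"
    and k m :: nat
  assumes "cyclic_operad Op e ocomp act"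
    and "finite_dim_operad Op"
  shows "\<exists>N. \<forall>n\<ge>N. induces_iso_on_quotient (free_og Op k m) (og_rel Op act k m) (M_op n m)"
    by (rule main_iso)

end
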